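(* Let $t\geqslant 2$, $r\in\{2t,2t+1\}$ and $n\geqslant 2r-1$. Consider the permutations $I^\ell$, defined for $\ell=2s-1$ with $2\leqslant s\leqslant r$ and for $\ell=2s$ with $2\leqslant s\leqslant r-2$. Then the maximum of $|B_r(I^\ell)\cap B_r(I_n)|$ over all these values of $\ell$ equals $$2\binom{2t-3}{t}+\ell^*\binom{2t-2}{t-1}.$$ This maximum is attained at $\ell=\ell^*$, where $\ell^*=5$ if $r=2t$ and $\ell^*=7$ if $r=2t+1$.
   Context: $\mathrm{Sym}_n$ is the symmetric group on $[n]$, $I_n$ is the identity, the Hamming distance is $d(\pi,\tau)=|\{i:\pi(i)\neq\tau(i)\}|$, and $B_r(\pi)=\{\sigma:d(\sigma,\pi)\leqslant r\}$. For $\ell=2s-1$ ($2\leqslant s\leqslant r$), $I^\ell\in\mathrm{Sym}_n$ denotes a permutation whose non-trivial cycles are one $\ell$-cycle and $r-s$ transpositions. For $\ell=2s$ ($2\leqslant s\leqslant r-2$), $I^\ell$ denotes a permutation whose non-trivial cycles are one $\ell$-cycle, one $3$-cycle and $r-s-2$ transpositions. In both cases $I^\ell$ has $2r-1$ non-fixed points, and the quantity $|B_r(I^\ell)\cap B_r(I_n)|$ depends only on this cycle type. Binomial convention: $\binom{p}{q}=0$ if $p<q$, $p<0$ or $q<0$. *)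

theory Defs
  imports Main "HOL-Library.Multiset" "HOL-Combinatorics.Combinatorics"
begin

definition Sym :: "nat \<Rightarrow> (nat \<Rightarrow> nat) set" where
  "Sym n = {\<sigma>. \<sigma> permutes {1..n}}"

definition hamming :: "nat \<Rightarrow> (nat \<Rightarrow> nat) \<Rightarrow> (nat \<Rightarrow> nat) \<Rightarrow> nat" where
  "hamming n \<pi> \<tau> = card {i \<in> {1..n}. \<pi> i \<noteq> \<tau> i}"

definition ball_r :: "nat \<Rightarrow> nat \<Rightarrow> (nat \<Rightarrow> nat) \<Rightarrow> (nat \<Rightarrow> nat) set" where
  "ball_r n r \<pi> = {\<sigma> \<in> Sym n. hamming n \<sigma> \<pi> \<le> r}"

definition cycle_type :: "(nat \<Rightarrow> nat) \<Rightarrow> nat multiset" where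
  "cycle_type \<sigma> = image_mset card (mset_set {orbit \<sigma> x | x. \<sigma> x \<noteq> x})"

definition admissible :: "nat \<Rightarrow> nat \<Rightarrow> bool" where
  "admissible r l \<longleftrightarrow> (\<exists>s. 2 \<le> s \<and> s \<le> r \<and> l = 2*s - 1) \<or> (\<exists>s. 2 \<le> s \<and> s + 2 \<le> r \<and> l = 2*s)"

text \<open>Cycle type (non-trivial cycles) of I^l.\<close>
definition I_type :: "nat \<Rightarrow> nat \<Rightarrow> nat multiset" where
  "I_type r l = (if odd l then {#l#} + replicate_mset (r - (l + 1) div 2) 2
                 else {#l, 3#} + replicate_mset (r - l div 2 - 2) 2)"

end

theory Submission
  imports Defs "HOL.Binomial_Plus"
begin


definition Cz :: "nat \<Rightarrow> int \<Rightarrow> int" where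
  "Cz q j = (if j < 0 then 0 else int (q choose nat j))"

definition W :: "nat \<Rightarrow> int \<Rightarrow> int \<Rightarrow> int" where
  "W q a b = (\<Sum>j\<in>{a..b}. Cz q j)"

lemma Cz_nonneg: "0 \<le> Cz q j" by (simp add: Cz_def)

lemma Cz_pascal: "Cz (Suc q) j = Cz q j + Cz q (j - 1)"
proof (cases "j \<le> 0")
  case True
  then show ?thesis by (cases "j = 0") (auto simp: Cz_def)
next
  case False
  then have "nat j = Suc (nat (j - 1))" by simp
  then show ?thesis using False by (simp add: Cz_def)
qed

lemma Cz_mirror: "Cz q j = Cz q (int q - j)"
proof (cases "j < 0")
  case True then show ?thesis by (simp add: Cz_def)
next
  case False
  show ?thesis
  proof (cases "j > int q")
    case True then show ?thesis using False by (simp add: Cz_def binomial_eq_0)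
  next
    case False2: False
    then have "nat (int q - j) = q - nat j" using False by simp
    then show ?thesis using False False2 binomial_symmetric[of "nat j" q] by (simp add: Cz_def)
  qed
qed

lemma Cz_uni_aux:
  assumes "int q \<le> 2*j" "j \<le> i"
  shows "Cz q i \<le> Cz q j"
proof (cases "i > int q")
  case True then show ?thesis by (simp add: Cz_def Cz_nonneg binomial_eq_0)
next
  case False
  have "nat j \<le> nat i" using assms by simp
  moreover have "q div 2 \<le> nat j" using assms by linarith
  moreover have "nat i \<le> q" using False by simp
  ultimately have "q choose nat i \<le> q choose nat j" by (rule binomial_antimono)
  then show ?thesis using assms by (simp add: Cz_def)
qed

lemma Cz_uni:
  assumes "\<bar>2*j - int q\<bar> \<le> \<bar>2*i - int q\<bar>"
  shows "Cz q i \<le> Cz q j"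
proof -
  define i' where "i' = (if int q \<le> 2*i then i else int q - i)"
  define j' where "j' = (if int q \<le> 2*j then j else int q - j)"
  have ci: "Cz q i = Cz q i'" unfolding i'_def using Cz_mirror by simp
  have cj: "Cz q j = Cz q j'" unfolding j'_def using Cz_mirror by simp
  have "int q \<le> 2*j'" "j' \<le> i'" using assms unfolding i'_def j'_def by (auto split: if_splits)
  then show ?thesis using ci cj Cz_uni_aux by simp
qed

lemma W_empty: "b < a \<Longrightarrow> W q a b = 0" by (simp add: W_def)

lemma W_nonneg: "0 \<le> W q a b" unfolding W_def by (rule sum_nonneg) (simp add: Cz_nonneg)

lemma W_sub: "a \<le> a' \<Longrightarrow> b' \<le> b \<Longrightarrow> W q a' b' \<le> W q a b"
  unfolding W_def by (rule sum_mono2) (auto simp: Cz_nonneg)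

lemma W_last: "a \<le> b \<Longrightarrow> W q a b = W q a (b - 1) + Cz q b"
proof -
  assume "a \<le> b"
  then have "{a..b} = insert b {a..b-1}" by auto
  then show ?thesis by (simp add: W_def add.commute)
qed

lemma W_first: "a \<le> b \<Longrightarrow> W q a b = Cz q a + W q (a + 1) b"
proof -
  assume "a \<le> b"
  then have "{a..b} = insert a {a+1..b}" by auto
  then show ?thesis by (simp add: W_def)
qed

lemma W_single: "W q a a = Cz q a" by (simp add: W_def)

lemma W_shift: "(\<Sum>j\<in>{a..b}. Cz q (j - 1)) = W q (a - 1) (b - 1)"
  unfolding W_def
  by (rule sum.reindex_bij_witness[of _ "\<lambda>j. j + 1" "\<lambda>j. j - 1"]) auto

lemma W_pascal: "W (Suc q) a b = W q a b + W q (a - 1) (b - 1)"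
  unfolding W_def[of "Suc q"] by (simp add: Cz_pascal sum.distrib W_shift W_def)

lemma W_mirror: "W q a b = W q (int q - b) (int q - a)"
  unfolding W_def
  apply (rule sum.reindex_bij_witness[of _ "\<lambda>j. int q - j" "\<lambda>j. int q - j"])
  apply auto
  by (metis Cz_mirror)


definition fO0 :: "nat \<Rightarrow> nat \<Rightarrow> int" where
  "fO0 t s = 2 * Cz (2*t-s) (int t) + (2*int s - 1) * W (2*t-s) (int t - int s + 1) (int t - 1)"
definition fO1 :: "nat \<Rightarrow> nat \<Rightarrow> int" where
  "fO1 t s = 2 * Cz (2*t+1-s) (int t) + (2*int s - 1) * W (2*t+1-s) (int t - int s + 2) (int t - 1)"
definition fE0 :: "nat \<Rightarrow> nat \<Rightarrow> int" where
  "fE0 t s = 2 * Cz (2*t-s-2) (int t) + 2 * Cz (2*t-s-2) (int t - 2) + 6 * Cz (2*t-s-2) (int t - 1)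
     + 2 * int s * (W (2*t-s-2) (int t - int s + 1) (int t - 1) + W (2*t-s-2) (int t - int s - 1) (int t - 3))"
definition fE1 :: "nat \<Rightarrow> nat \<Rightarrow> int" where
  "fE1 t s = 2 * Cz (2*t-s-1) (int t) + 2 * Cz (2*t-s-1) (int t - 1)
     + 2 * int s * (W (2*t-s-1) (int t - int s + 1) (int t - 1) + W (2*t-s-1) (int t - int s) (int t - 2))"

lemma O0_step:
  assumes "1 \<le> s" "s + 1 \<le> 2*t"
  defines "q' \<equiv> 2*t - s - 1"
  shows "fO0 t (s+1) + (2*int s - 3) * W q' (int t - int s + 1) (int t - 1)
         = fO0 t s + (2*int s - 1) * Cz q' (int t - 1)"
proof -
  have q1: "2*t - s = Suc q'" using assms by (simp add: q'_def)
  have q2: "2*t - (s+1) = q'" using assms by (simp add: q'_def)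
  have iq: "int q' = 2 * int t - int s - 1" using assms by (simp add: q'_def)
  define P where "P = W q' (int t - int s + 1) (int t - 1)"
  define c where "c = Cz q' (int t - 1)"
  have a1: "W (Suc q') (int t - int s + 1) (int t - 1) = P + W q' (int t - int s) (int t - 2)"
    using W_pascal[of q' "int t - int s + 1" "int t - 1"] by (simp add: P_def algebra_simps)
  have a2: "W q' (int t - int s) (int t - 2) = P"
    using W_mirror[of q' "int t - int s" "int t - 2"] by (simp add: P_def iq algebra_simps)
  have a3: "Cz (Suc q') (int t) = Cz q' (int t) + c" by (simp add: Cz_pascal c_def)
  have a4: "W q' (int t - int (s+1) + 1) (int t - 1) = Cz q' (int t - int s) + P"
    using W_first[of "int t - int s" "int t - 1" q'] assms by (simp add: P_def algebra_simps)
  have a5: "Cz q' (int t - int s) = c"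
    using Cz_mirror[of q' "int t - int s"] by (simp add: c_def iq algebra_simps)
  have "fO0 t s = 2 * Cz q' (int t) + 2 * c + (2*int s - 1) * (2 * P)"
    unfolding fO0_def q1 a1 a2 a3 by (simp add: algebra_simps)
  moreover have "fO0 t (s+1) = 2 * Cz q' (int t) + (2*int s + 1) * (c + P)"
    unfolding fO0_def q2 a4 a5 by (simp add: algebra_simps)
  ultimately show ?thesis unfolding P_def[symmetric] c_def[symmetric] by (simp add: algebra_simps)
qed

lemma O1_step:
  assumes "2 \<le> s" "s \<le> 2*t"
  defines "q' \<equiv> 2*t - s"
  shows "fO1 t (s+1) + (2*int s - 3) * W q' (int t - int s + 2) (int t - 1)
         = fO1 t s + (2*int s - 1) * Cz q' (int t - 1)"
proof -
  have q1: "2*t + 1 - s = Suc q'" using assms by (simp add: q'_def)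
  have q2: "2*t + 1 - (s+1) = q'" using assms by (simp add: q'_def)
  have iq: "int q' = 2 * int t - int s" using assms by (simp add: q'_def)
  define P where "P = W q' (int t - int s + 2) (int t - 1)"
  define c where "c = Cz q' (int t - 1)"
  have a1: "W (Suc q') (int t - int s + 2) (int t - 1) = P + W q' (int t - int s + 1) (int t - 2)"
    using W_pascal[of q' "int t - int s + 2" "int t - 1"] by (simp add: P_def algebra_simps)
  have a2: "W q' (int t - int s + 1) (int t - 2) = P"
    using W_mirror[of q' "int t - int s + 1" "int t - 2"] by (simp add: P_def iq algebra_simps)
  have a3: "Cz (Suc q') (int t) = Cz q' (int t) + c" by (simp add: Cz_pascal c_def)
  have a4: "W q' (int t - int (s+1) + 2) (int t - 1) = Cz q' (int t - int s + 1) + P"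
    using W_first[of "int t - int s + 1" "int t - 1" q'] assms by (simp add: P_def algebra_simps)
  have a5: "Cz q' (int t - int s + 1) = c"
    using Cz_mirror[of q' "int t - int s + 1"] by (simp add: c_def iq algebra_simps)
  have "fO1 t s = 2 * Cz q' (int t) + 2 * c + (2*int s - 1) * (2 * P)"
    unfolding fO1_def q1 a1 a2 a3 by (simp add: algebra_simps)
  moreover have "fO1 t (s+1) = 2 * Cz q' (int t) + (2*int s + 1) * (c + P)"
    unfolding fO1_def q2 a4 a5 by (simp add: algebra_simps)
  ultimately show ?thesis unfolding P_def[symmetric] c_def[symmetric] by (simp add: algebra_simps)
qed


lemma O0_dec:
  assumes "3 \<le> s" "s + 1 \<le> 2*t"
  shows "fO0 t (s+1) \<le> fO0 t s"
proof -
  define q' where "q' = 2*t - s - 1"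
  have iq: "int q' = 2 * int t - int s - 1" using assms by (simp add: q'_def)
  define P where "P = W q' (int t - int s + 1) (int t - 1)"
  define c where "c = Cz q' (int t - 1)"
  have e: "fO0 t (s+1) + (2*int s - 3) * P = fO0 t s + (2*int s - 1) * c"
    using O0_step[of s t] assms unfolding P_def c_def q'_def by simp
  have "W q' (int t - 2) (int t - 1) \<le> P" unfolding P_def by (rule W_sub) (use assms in auto)
  moreover have "W q' (int t - 2) (int t - 1) = Cz q' (int t - 2) + c"
    using W_last[of "int t - 2" "int t - 1" q'] by (simp add: c_def W_single)
  moreover have "c \<le> Cz q' (int t - 2)" unfolding c_def by (rule Cz_uni) (use assms iq in auto)
  ultimately have "2 * c \<le> P" by simp
  moreover have "0 \<le> c" by (simp add: c_def Cz_nonneg)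
  ultimately have "(2*int s - 1) * c \<le> (2*int s - 3) * P"
  proof -
    assume h: "2*c \<le> P" "0 \<le> c"
    have "(2*int s - 1) * c \<le> (4*int s - 6) * c" by (rule mult_right_mono) (use assms h in auto)
    also have "\<dots> = (2*int s - 3) * (2*c)" by (simp add: algebra_simps)
    finally have "(2*int s - 1) * c \<le> (2*int s - 3) * (2*c)" .
    also have "\<dots> \<le> (2*int s - 3) * P" using h assms by (intro mult_left_mono) auto
    finally show ?thesis .
  qed
  with e show ?thesis by linarith
qed

lemma O0_23: assumes "3 \<le> 2*t" shows "fO0 t 2 \<le> fO0 t 3"
proof -
  have e: "fO0 t (2+1) + (2*int 2 - 3) * W (2*t-2-1) (int t - int 2 + 1) (int t - 1)
         = fO0 t 2 + (2*int 2 - 1) * Cz (2*t-2-1) (int t - 1)"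
    using O0_step[of 2 t] assms by simp
  then have "fO0 t 3 + Cz (2*t-3) (int t - 1) = fO0 t 2 + 3 * Cz (2*t-3) (int t - 1)"
    by (simp add: W_single numeral_3_eq_3)
  then show ?thesis using Cz_nonneg[of "2*t-3" "int t - 1"] by linarith
qed

lemma O0_max: assumes "2 \<le> t" "2 \<le> s" "s \<le> 2*t" shows "fO0 t s \<le> fO0 t 3"
proof (cases "s = 2")
  case True then show ?thesis using O0_23 assms by simp
next
  case False
  then have "3 \<le> s" using assms by simp
  then show ?thesis using assms(3)
  proof (induction s rule: dec_induct)
    case base then show ?case by simp
  next
    case (step k)
    then have "fO0 t (Suc k) \<le> fO0 t k" using O0_dec[of k t] by simp
    then show ?case using step by simp
  qed
qed

lemma O1_dec:
  assumes "4 \<le> s" "s \<le> 2*t"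
  shows "fO1 t (s+1) \<le> fO1 t s"
proof -
  define q' where "q' = 2*t - s"
  have iq: "int q' = 2 * int t - int s" using assms by (simp add: q'_def)
  define P where "P = W q' (int t - int s + 2) (int t - 1)"
  define c where "c = Cz q' (int t - 1)"
  have e: "fO1 t (s+1) + (2*int s - 3) * P = fO1 t s + (2*int s - 1) * c"
    using O1_step[of s t] assms unfolding P_def c_def q'_def by simp
  have "W q' (int t - 2) (int t - 1) \<le> P" unfolding P_def by (rule W_sub) (use assms in auto)
  moreover have "W q' (int t - 2) (int t - 1) = Cz q' (int t - 2) + c"
    using W_last[of "int t - 2" "int t - 1" q'] by (simp add: c_def W_single)
  moreover have "c \<le> Cz q' (int t - 2)" unfolding c_def by (rule Cz_uni) (use assms iq in auto)
  ultimately have "2 * c \<le> P" by simp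
  moreover have "0 \<le> c" by (simp add: c_def Cz_nonneg)
  ultimately have "(2*int s - 1) * c \<le> (2*int s - 3) * P"
  proof -
    assume h: "2*c \<le> P" "0 \<le> c"
    have "(2*int s - 1) * c \<le> (4*int s - 6) * c" by (rule mult_right_mono) (use assms h in auto)
    also have "\<dots> = (2*int s - 3) * (2*c)" by (simp add: algebra_simps)
    finally have "(2*int s - 1) * c \<le> (2*int s - 3) * (2*c)" .
    also have "\<dots> \<le> (2*int s - 3) * P" using h assms by (intro mult_left_mono) auto
    finally show ?thesis .
  qed
  with e show ?thesis by linarith
qed

lemma O1_small: assumes "2 \<le> t" shows "fO1 t 2 \<le> fO1 t 4" "fO1 t 3 \<le> fO1 t 4"
proof -
  have e3: "fO1 t (3+1) + (2*int 3 - 3) * W (2*t-3) (int t - int 3 + 2) (int t - 1)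
         = fO1 t 3 + (2*int 3 - 1) * Cz (2*t-3) (int t - 1)"
    using O1_step[of 3 t] assms by simp
  then have "fO1 t 4 + 3 * Cz (2*t-3) (int t - 1) = fO1 t 3 + 5 * Cz (2*t-3) (int t - 1)"
    by (simp add: W_single)
  then show "fO1 t 3 \<le> fO1 t 4" using Cz_nonneg[of "2*t-3" "int t - 1"] by linarith
  have e2: "fO1 t (2+1) + (2*int 2 - 3) * W (2*t-2) (int t - int 2 + 2) (int t - 1)
         = fO1 t 2 + (2*int 2 - 1) * Cz (2*t-2) (int t - 1)"
    using O1_step[of 2 t] assms by simp
  then have "fO1 t 3 = fO1 t 2 + 3 * Cz (2*t-2) (int t - 1)"
    by (simp add: W_empty numeral_3_eq_3)
  then show "fO1 t 2 \<le> fO1 t 4" using Cz_nonneg[of "2*t-2" "int t - 1"] \<open>fO1 t 3 \<le> fO1 t 4\<close> by linarith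
qed

lemma O1_max: assumes "2 \<le> t" "2 \<le> s" "s \<le> 2*t+1" shows "fO1 t s \<le> fO1 t 4"
proof (cases "s \<le> 3")
  case True
  then have "s = 2 \<or> s = 3" using assms by auto
  then show ?thesis using O1_small[OF assms(1)] by auto
next
  case False
  then have "4 \<le> s" by simp
  then show ?thesis using assms(3)
  proof (induction s rule: dec_induct)
    case base then show ?case by simp
  next
    case (step k)
    then have "fO1 t (Suc k) \<le> fO1 t k" using O1_dec[of k t] by simp
    then show ?case using step by simp
  qed
qed

lemma E1_le: assumes "1 \<le> s" "s + 1 \<le> 2*t" shows "fE1 t s \<le> fO1 t (s+1)"
proof -
  define q where "q = 2*t - s - 1"
  have q1: "2*t+1-(s+1) = Suc q" using assms by (simp add: q_def)
  define R where "R = W q (int t - int s + 1) (int t - 1) + W q (int t - int s) (int t - 2)"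
  have "W (Suc q) (int t - int (s+1) + 2) (int t - 1) = R"
    using W_pascal[of q "int t - int s + 1" "int t - 1"] by (simp add: R_def algebra_simps)
  then have "fO1 t (s+1) = 2 * Cz q (int t) + 2 * Cz q (int t - 1) + (2 * int s + 1) * R"
    unfolding fO1_def q1 by (simp add: Cz_pascal algebra_simps)
  moreover have "fE1 t s = 2 * Cz q (int t) + 2 * Cz q (int t - 1) + 2 * int s * R"
    unfolding fE1_def q_def R_def by simp
  moreover have "0 \<le> R" unfolding R_def using W_nonneg by (simp add: add_nonneg_nonneg)
  ultimately show ?thesis by (simp add: algebra_simps)
qed

lemma E0_le: assumes "2 \<le> s" "s + 2 \<le> 2*t" shows "fE0 t s \<le> fO0 t (s+1)"
proof -
  define q where "q = 2*t - s - 2"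
  have q1: "2*t-(s+1) = Suc q" using assms by (simp add: q_def)
  have iq: "int q = 2 * int t - int s - 2" using assms by (simp add: q_def)
  define R where "R = W q (int t - int s + 1) (int t - 1) + W q (int t - int s - 1) (int t - 3)"
  have b1: "W (Suc q) (int t - int (s+1) + 1) (int t - 1)
      = W q (int t - int s) (int t - 1) + W q (int t - int s - 1) (int t - 2)"
    using W_pascal[of q "int t - int s" "int t - 1"] by (simp add: algebra_simps)
  have b2: "W q (int t - int s) (int t - 1) = Cz q (int t - int s) + W q (int t - int s + 1) (int t - 1)"
    using W_first[of "int t - int s" "int t - 1" q] assms by simp
  have b3: "W q (int t - int s - 1) (int t - 2) = W q (int t - int s - 1) (int t - 3) + Cz q (int t - 2)"
    using W_last[of "int t - int s - 1" "int t - 2" q] assms by (simp add: algebra_simps)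
  have b4: "Cz q (int t - int s) = Cz q (int t - 2)"
    using Cz_mirror[of q "int t - int s"] by (simp add: iq algebra_simps)
  have "fO0 t (s+1) = 2 * Cz q (int t) + 2 * Cz q (int t - 1) + (2 * int s + 1) * (R + 2 * Cz q (int t - 2))"
    unfolding fO0_def q1 b1 b2 b3 b4 R_def by (simp add: Cz_pascal algebra_simps)
  moreover have "fE0 t s = 2 * Cz q (int t) + 2 * Cz q (int t - 2) + 6 * Cz q (int t - 1) + 2 * int s * R"
    unfolding fE0_def q_def R_def by simp
  moreover have "0 \<le> R" unfolding R_def using W_nonneg by (simp add: add_nonneg_nonneg)
  moreover have "Cz q (int t - 1) \<le> Cz q (int t - 2)" by (rule Cz_uni) (use assms iq in auto)
  moreover have "0 \<le> Cz q (int t - 2)" by (rule Cz_nonneg)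
  moreover have "8 * Cz q (int t - 2) \<le> (4 * int s) * Cz q (int t - 2)"
    using assms \<open>0 \<le> Cz q (int t - 2)\<close> by (intro mult_right_mono) auto
  moreover have "(2 * int s + 1) * (R + 2 * Cz q (int t - 2)) = 2 * int s * R + R + (4 * int s) * Cz q (int t - 2) + 2 * Cz q (int t - 2)"
    by (simp add: algebra_simps)
  ultimately show ?thesis by linarith
qed

lemma O0_3_val: assumes "2 \<le> t"
  shows "fO0 t 3 = int (2 * ((2*t - 3) choose t) + 5 * ((2*t - 2) choose (t - 1)))"
proof -
  have "W (2*t-3) (int t - 2) (int t - 1) = Cz (2*t-3) (int t - 2) + Cz (2*t-3) (int t - 1)"
    using W_last[of "int t - 2" "int t - 1" "2*t-3"] by (simp add: W_single)
  also have "\<dots> = Cz (Suc (2*t-3)) (int t - 1)" by (simp add: Cz_pascal)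
  also have "\<dots> = int ((2*t - 2) choose (t - 1))"
  proof -
    have "Suc (2*t-3) = 2*t-2" "nat (int t - 1) = t - 1" using assms by auto
    then show ?thesis using assms by (simp add: Cz_def)
  qed
  finally have "W (2*t-3) (int t - 2) (int t - 1) = int ((2*t - 2) choose (t - 1))" .
  then show ?thesis unfolding fO0_def by (simp add: Cz_def numeral_3_eq_3)
qed

lemma O1_4_val: assumes "2 \<le> t"
  shows "fO1 t 4 = int (2 * ((2*t - 3) choose t) + 7 * ((2*t - 2) choose (t - 1)))"
proof -
  have "W (2*t-3) (int t - 2) (int t - 1) = Cz (2*t-3) (int t - 2) + Cz (2*t-3) (int t - 1)"
    using W_last[of "int t - 2" "int t - 1" "2*t-3"] by (simp add: W_single)
  also have "\<dots> = Cz (Suc (2*t-3)) (int t - 1)" by (simp add: Cz_pascal)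
  also have "\<dots> = int ((2*t - 2) choose (t - 1))"
  proof -
    have "Suc (2*t-3) = 2*t-2" "nat (int t - 1) = t - 1" using assms by auto
    then show ?thesis using assms by (simp add: Cz_def)
  qed
  finally have "W (2*t-3) (int t - 2) (int t - 1) = int ((2*t - 2) choose (t - 1))" .
  moreover have "2*t+1-4 = 2*t-3" by simp
  ultimately show ?thesis unfolding fO1_def by (simp add: Cz_def)
qed


locale pctx =
  fixes p :: "nat \<Rightarrow> nat" and n :: nat
  assumes perm: "p permutes {1..n}"
begin

abbreviation "U \<equiv> {1..n::nat}"
definition "S = {x. p x \<noteq> x}"
definition "Os = {orbit p x | x. p x \<noteq> x}"
definition ssum :: "nat set set \<Rightarrow> nat" where "ssum T = (\<Sum>C\<in>T. card C)"

lemma pm: "permutation p" by (meson finite_atLeastAtMost perm permutation_permutes)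
lemma p_inj: "inj p" using perm by (rule permutes_inj)
lemma p_eq_iff: "p a = p b \<longleftrightarrow> a = b" using p_inj by (auto dest: injD)
lemma S_sub: "S \<subseteq> U"
proof
  fix x assume "x \<in> S" then show "x \<in> U" using permutes_not_in[OF perm, of x] by (auto simp: S_def)
qed
lemma fin_S: "finite S" using S_sub by (rule finite_subset) simp
lemma pU: "i \<in> U \<Longrightarrow> p i \<in> U" using permutes_in_image[OF perm] by simp
lemma pS: "i \<in> S \<Longrightarrow> p i \<in> S" using p_eq_iff[of "p i" i] by (simp add: S_def)

lemma self_orb: "x \<in> orbit p x" using pm by (rule permutation_self_in_orbit)

lemma orb_eq: "y \<in> orbit p x \<Longrightarrow> orbit p y = orbit p x"
  using orbit_cyclic_eq3[OF cyclic_on_orbit'[OF pm]] by blast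

lemma orb_closed: "y \<in> orbit p x \<Longrightarrow> p y \<in> orbit p x"
  using orbit.step by metis

lemma orb_funpow: "(p ^^ j) x \<in> orbit p x"
  by (rule funpow_in_orbit[OF self_orb])

lemma orb_sub_S: "x \<in> S \<Longrightarrow> orbit p x \<subseteq> S"
proof
  fix y assume x: "x \<in> S" and y: "y \<in> orbit p x"
  show "y \<in> S"
  proof (rule ccontr)
    assume "y \<notin> S"
    then have "orbit p y = {y}" using orbit_eq_singleton_iff[of p y] by (simp add: S_def)
    then have "orbit p x = {y}" using orb_eq[OF y] by simp
    then have "p x = x" using orbit_eq_singleton_iff[of p x] self_orb[of x] by auto
    then show False using x by (simp add: S_def)
  qed
qed

lemma fin_orb: "finite (orbit p x)" by (rule finite_orbit[OF self_orb])

lemma orb_card2: "x \<in> S \<Longrightarrow> 2 \<le> card (orbit p x)"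
proof -
  assume x: "x \<in> S"
  have "{x, p x} \<subseteq> orbit p x" using self_orb orb_closed[OF self_orb] by auto
  moreover have "card {x, p x} = 2" using x by (auto simp: S_def)
  ultimately show ?thesis using card_mono[OF fin_orb] by metis
qed

lemma O_alt: "Os = (\<lambda>x. orbit p x) ` S" unfolding Os_def S_def by auto
lemma fin_O: "finite Os" unfolding O_alt using fin_S by simp
lemma O_sub: "C \<in> Os \<Longrightarrow> C \<subseteq> S" unfolding O_alt using orb_sub_S by auto
lemma O_fin: "C \<in> Os \<Longrightarrow> finite C" unfolding O_alt using fin_orb by auto
lemma O_ne: "C \<in> Os \<Longrightarrow> C \<noteq> {}" unfolding O_alt using self_orb by auto
lemma O_closed: "C \<in> Os \<Longrightarrow> i \<in> C \<Longrightarrow> p i \<in> C" unfolding O_alt using orb_closed by auto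
lemma O_of: "C \<in> Os \<Longrightarrow> i \<in> C \<Longrightarrow> C = orbit p i" unfolding O_alt using orb_eq by auto
lemma O_in: "x \<in> S \<Longrightarrow> orbit p x \<in> Os" unfolding O_alt by auto
lemma O_disj: "C1 \<in> Os \<Longrightarrow> C2 \<in> Os \<Longrightarrow> C1 \<noteq> C2 \<Longrightarrow> C1 \<inter> C2 = {}"
  using O_of by blast
lemma Union_O: "\<Union>Os = S" unfolding O_alt using orb_sub_S self_orb by auto

lemma ssum_card: assumes "T \<subseteq> Os" shows "ssum T = card (\<Union>T)"
proof -
  have "pairwise disjnt T" unfolding pairwise_def disjnt_def using assms O_disj by blast
  moreover have "\<And>A. A \<in> T \<Longrightarrow> finite A" using assms O_fin by blast
  ultimately show ?thesis unfolding ssum_def by (simp add: card_Union_disjoint)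
qed

lemma sum_O: "ssum Os = card S" using ssum_card[of Os] Union_O by simp

lemma UT_sub: "T \<subseteq> Os \<Longrightarrow> \<Union>T \<subseteq> S" using O_sub by blast
lemma UT_U: "T \<subseteq> Os \<Longrightarrow> \<Union>T \<subseteq> U" using UT_sub S_sub by blast
lemma UT_closed: "T \<subseteq> Os \<Longrightarrow> i \<in> \<Union>T \<Longrightarrow> p i \<in> \<Union>T" using O_closed by blast

lemma T_of_union: "T \<subseteq> Os \<Longrightarrow> T = {C \<in> Os. C \<subseteq> \<Union>T}"
proof safe
  fix C assume T: "T \<subseteq> Os" and C: "C \<in> Os" "C \<subseteq> \<Union>T"
  obtain z where z: "z \<in> C" using O_ne[OF C(1)] by blast
  then obtain C' where "C' \<in> T" "z \<in> C'" using C by blast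
  then show "C \<in> T" using O_disj[OF C(1), of C'] T z by blast
qed auto

lemma union_inj: "T1 \<subseteq> Os \<Longrightarrow> T2 \<subseteq> Os \<Longrightarrow> \<Union>T1 = \<Union>T2 \<Longrightarrow> T1 = T2"
  using T_of_union by metis

lemma closed_union:
  assumes "A \<subseteq> S" "\<And>i. i \<in> A \<Longrightarrow> p i \<in> A"
  shows "\<Union>{C \<in> Os. C \<subseteq> A} = A"
proof
  show "A \<subseteq> \<Union>{C \<in> Os. C \<subseteq> A}"
  proof
    fix x assume x: "x \<in> A"
    have "orbit p x \<subseteq> A"
    proof
      fix y assume "y \<in> orbit p x" then show "y \<in> A"
        by (induction rule: orbit.induct) (use x assms in auto)
    qed
    then show "x \<in> \<Union>{C \<in> Os. C \<subseteq> A}" using O_in[of x] x assms self_orb by blast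
  qed
qed auto

definition per :: "nat \<Rightarrow> nat" where "per y = card (orbit p y)"

lemma per_dist: "per y = funpow_dist1 p y y"
proof -
  have "orbit p y = (\<lambda>n. (p ^^ n) y) ` {0..<funpow_dist1 p y y}"
    by (rule orbit_conv_funpow_dist1[OF self_orb])
  moreover have "inj_on (\<lambda>n. (p ^^ n) y) {0..<funpow_dist1 p y y}"
    by (rule inj_on_funpow_dist1[OF self_orb])
  ultimately show ?thesis unfolding per_def by (simp add: card_image)
qed

lemma per_pos: "0 < per y" unfolding per_dist by simp

lemma per_period: "(p ^^ per y) y = y"
  unfolding per_dist by (rule funpow_dist1_prop[OF self_orb])

lemma per_inj: "i < per y \<Longrightarrow> j < per y \<Longrightarrow> (p ^^ i) y = (p ^^ j) y \<Longrightarrow> i = j"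
  using inj_on_funpow_dist1[OF self_orb[of y]] unfolding per_dist[symmetric]
  by (auto simp: inj_on_def)

lemma per_orb: "z \<in> orbit p y \<Longrightarrow> \<exists>j<per y. z = (p ^^ j) y"
  using orbit_conv_funpow_dist1[OF self_orb[of y]] unfolding per_dist[symmetric] by auto

lemma per_mod: "(p ^^ j) y = (p ^^ (j mod per y)) y"
proof -
  have "(p ^^ (q * per y)) y = y" for q
    by (induction q) (simp_all add: funpow_add per_period)
  then have "(p ^^ (j mod per y + (j div per y) * per y)) y = (p ^^ (j mod per y)) y"
    by (simp add: funpow_add)
  then show ?thesis by (metis mod_div_mult_eq)
qed


lemma Sym_crit:
  assumes "\<And>i. i \<notin> U \<Longrightarrow> \<sigma> i = i" "\<And>i. i \<in> U \<Longrightarrow> \<sigma> i \<in> U" "inj_on \<sigma> U"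
  shows "\<sigma> \<in> Sym n"
proof -
  have "\<sigma> ` U \<subseteq> U" using assms(2) by blast
  then have "\<sigma> ` U = U" using endo_inj_surj[OF finite_atLeastAtMost _ assms(3)] by blast
  then have "bij_betw \<sigma> U U" using assms(3) by (simp add: bij_betw_def)
  then have "\<sigma> permutes U" using assms(1) by (rule bij_imp_permutes)
  then show ?thesis by (simp add: Sym_def)
qed

lemma Sym_inj: "\<sigma> \<in> Sym n \<Longrightarrow> inj \<sigma>" by (rule permutes_inj[of _ U]) (simp add: Sym_def)
lemma Sym_out: "\<sigma> \<in> Sym n \<Longrightarrow> i \<notin> U \<Longrightarrow> \<sigma> i = i" by (rule permutes_not_in[of _ U]) (simp_all add: Sym_def)
lemma p_Sym: "p \<in> Sym n" using perm by (simp add: Sym_def)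
lemma id_Sym: "id \<in> Sym n" by (simp add: Sym_def permutes_id)

definition sA :: "nat set set \<Rightarrow> nat \<Rightarrow> nat" where
  "sA T i = (if i \<in> \<Union>T then p i else i)"

lemma sA_moved: "T \<subseteq> Os \<Longrightarrow> {i. sA T i \<noteq> i} = \<Union>T"
  unfolding sA_def using UT_sub unfolding S_def by auto

lemma sA_Sym: assumes T: "T \<subseteq> Os" shows "sA T \<in> Sym n"
proof (rule Sym_crit)
  fix i assume "i \<notin> U" then have "i \<notin> \<Union>T" using UT_U[OF T] by blast
  then show "sA T i = i" unfolding sA_def by simp
next
  fix i assume "i \<in> U" then show "sA T i \<in> U" unfolding sA_def using pU by auto
next
  show "inj_on (sA T) U"
  proof (rule inj_onI)
    fix i j assume "sA T i = sA T j"
    then show "i = j" unfolding sA_def using UT_closed[OF T] p_eq_iff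
      by (auto split: if_splits)
  qed
qed

lemma sA_d_id: assumes T: "T \<subseteq> Os" shows "hamming n (sA T) id = ssum T"
proof -
  have "{i \<in> U. sA T i \<noteq> id i} = U \<inter> {i. sA T i \<noteq> i}" by auto
  also have "\<dots> = \<Union>T" using sA_moved[OF T] UT_U[OF T] by blast
  finally have "{i \<in> U. sA T i \<noteq> id i} = \<Union>T" .
  then show ?thesis by (simp add: hamming_def ssum_card[OF T])
qed

lemma sA_d_p: assumes T: "T \<subseteq> Os" shows "hamming n (sA T) p = card S - ssum T"
proof -
  have "{i \<in> U. sA T i \<noteq> p i} = S - \<Union>T" unfolding sA_def using S_sub by (auto simp: S_def)
  then show ?thesis using UT_sub[OF T] fin_S by (simp add: hamming_def ssum_card[OF T] card_Diff_subset finite_subset)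
qed


definition arc :: "nat \<Rightarrow> nat \<Rightarrow> nat set" where "arc y k = (\<lambda>j. (p ^^ j) y) ` {..<k}"

definition sB :: "nat \<Rightarrow> nat \<Rightarrow> nat set set \<Rightarrow> nat \<Rightarrow> nat" where
  "sB y k T i = (if i = (p ^^ k) y then y else if i \<in> \<Union>T \<union> arc y k then p i else i)"

lemma orbit_in_Os: "y \<in> S \<Longrightarrow> orbit p y \<in> Os" by (rule O_in)

end

locale vB = pctx +
  fixes y k T
  assumes yS: "y \<in> S" and T: "T \<subseteq> Os - {orbit p y}" and k1: "1 \<le> k" and k2: "k + 2 \<le> per y"
begin

abbreviation "x \<equiv> (p ^^ k) y"
abbreviation "P \<equiv> \<Union>T \<union> arc y k"

lemma T': "T \<subseteq> Os" using T by blast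
lemma arc_orb: "arc y k \<subseteq> orbit p y" unfolding arc_def using orb_funpow by auto
lemma orb_S: "orbit p y \<subseteq> S" using orb_sub_S[OF yS] .
lemma x_orb: "x \<in> orbit p y" by (rule orb_funpow)
lemma card_arc: "card (arc y k) = k"
proof -
  have "inj_on (\<lambda>j. (p ^^ j) y) {..<k}"
  proof (rule inj_onI)
    fix a b assume "a \<in> {..<k}" "b \<in> {..<k}" "(p ^^ a) y = (p ^^ b) y"
    then show "a = b" using per_inj[of a y b] k2 by simp
  qed
  then show ?thesis unfolding arc_def by (simp add: card_image)
qed
lemma fin_arc: "finite (arc y k)" unfolding arc_def by simp
lemma x_arc: "x \<notin> arc y k"
proof
  assume "x \<in> arc y k"
  then obtain j where "j < k" "(p ^^ j) y = x" unfolding arc_def by auto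
  then show False using per_inj[of j y k] k2 by auto
qed
lemma y_arc: "y \<in> arc y k" unfolding arc_def using k1 by (auto intro!: image_eqI[of _ _ 0])
lemma UT_disj: "\<Union>T \<inter> orbit p y = {}"
proof -
  have "C \<inter> orbit p y = {}" if "C \<in> T" for C
    using O_disj[of C "orbit p y"] that T orbit_in_Os[OF yS] by blast
  then show ?thesis by blast
qed
lemma x_UT: "x \<notin> \<Union>T" using UT_disj x_orb by blast
lemma y_UT: "y \<notin> \<Union>T" using UT_disj self_orb by blast
lemma arc_UT: "\<Union>T \<inter> arc y k = {}" using UT_disj arc_orb by blast
lemma x_ne_y: "x \<noteq> y" using per_inj[of k y 0] k1 k2 by auto
lemma px_ne_y: "p x \<noteq> y"
proof -
  have "p x = (p ^^ Suc k) y" by simp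
  then show ?thesis using per_inj[of "Suc k" y 0] k2 by auto
qed
lemma xS: "x \<in> S" using x_orb orb_S by blast
lemma P_S: "P \<subseteq> S" using UT_sub[OF T'] arc_orb orb_S by blast

lemma pP: "i \<in> P \<Longrightarrow> p i \<in> P \<union> {x} \<and> p i \<noteq> y"
proof -
  assume i: "i \<in> P"
  show ?thesis
  proof (cases "i \<in> \<Union>T")
    case True
    then have "p i \<in> \<Union>T" using UT_closed[OF T'] by blast
    then show ?thesis using y_UT by auto
  next
    case False
    then obtain j where j: "j < k" "i = (p ^^ j) y" using i unfolding arc_def by auto
    then have pi: "p i = (p ^^ Suc j) y" by simp
    have "p i \<noteq> y" using pi per_inj[of "Suc j" y 0] j k2 by auto
    moreover have "p i \<in> arc y k \<union> {x}"
    proof (cases "Suc j < k")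
      case True
      then have "(p ^^ Suc j) y \<in> arc y k" unfolding arc_def by blast
      then show ?thesis using pi by simp
    next
      case False then have "Suc j = k" using j by simp
      then show ?thesis using pi by simp
    qed
    ultimately show ?thesis by blast
  qed
qed

lemma sB_x: "sB y k T x = y" by (simp add: sB_def)
lemma sB_P: "i \<in> P \<Longrightarrow> sB y k T i = p i" using x_arc x_UT by (auto simp: sB_def)
lemma sB_rest: "i \<notin> P \<Longrightarrow> i \<noteq> x \<Longrightarrow> sB y k T i = i" by (simp add: sB_def)

lemma sB_inj: "inj (sB y k T)"
proof (rule injI)
  fix i j assume e: "sB y k T i = sB y k T j"
  have yP: "y \<in> P" using y_arc by blast
  have xP: "x \<notin> P" using x_arc x_UT by blast
  consider "i \<in> P" | "i = x" | "i \<notin> P" "i \<noteq> x" by blast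
  then show "i = j"
  proof cases
    case 1
    note pi = pP[OF 1]
    consider "j \<in> P" | "j = x" | "j \<notin> P" "j \<noteq> x" by blast
    then show ?thesis
    proof cases
      case 1 then show ?thesis using e sB_P[OF 1] sB_P[OF \<open>i \<in> P\<close>] p_eq_iff by simp
    next
      case 2 then show ?thesis using e sB_P[OF \<open>i \<in> P\<close>] sB_x pi by simp
    next
      case 3 then show ?thesis using e sB_P[OF \<open>i \<in> P\<close>] sB_rest[OF 3] pi by auto
    qed
  next
    case 2
    consider "j \<in> P" | "j = x" | "j \<notin> P" "j \<noteq> x" by blast
    then show ?thesis
    proof cases
      case 1 then show ?thesis using e sB_P[OF 1] sB_x 2 pP[OF 1] by simp
    next
      case 2 then show ?thesis using \<open>i = x\<close> by simp
    next
      case 3 then show ?thesis using e sB_rest[OF 3] sB_x 2 yP by auto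
    qed
  next
    case 3
    consider "j \<in> P" | "j = x" | "j \<notin> P" "j \<noteq> x" by blast
    then show ?thesis
    proof cases
      case 1 then show ?thesis using e sB_P[OF 1] sB_rest[OF 3] pP[OF 1] 3 by auto
    next
      case 2 then show ?thesis using e sB_rest[OF 3] sB_x 3 yP by auto
    next
      case 3 then show ?thesis using e sB_rest[OF 3] sB_rest[OF \<open>i \<notin> P\<close> \<open>i \<noteq> x\<close>] by simp
    qed
  qed
qed

lemma P_U: "P \<subseteq> U" using P_S S_sub by blast
lemma xU: "x \<in> U" using xS S_sub by blast
lemma yU: "y \<in> U" using yS S_sub by blast

lemma sB_Sym: "sB y k T \<in> Sym n"
proof (rule Sym_crit)
  fix i assume "i \<notin> U"
  then have "i \<notin> P" "i \<noteq> x" using P_U xU by auto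
  then show "sB y k T i = i" by (rule sB_rest)
next
  fix i assume i: "i \<in> U"
  show "sB y k T i \<in> U" unfolding sB_def using yU pU[OF i] i by simp
next
  show "inj_on (sB y k T) U" using sB_inj inj_on_subset by blast
qed

lemma sB_moved: "{i. sB y k T i \<noteq> i} = insert x P"
proof -
  have "i \<in> P \<Longrightarrow> p i \<noteq> i" for i using P_S by (auto simp: S_def)
  then show ?thesis using sB_P sB_rest sB_x x_ne_y by fastforce
qed

lemma sB_d_id: "hamming n (sB y k T) id = ssum T + k + 1"
proof -
  have "{i \<in> U. sB y k T i \<noteq> id i} = U \<inter> {i. sB y k T i \<noteq> i}" by auto
  also have "\<dots> = insert x P" using sB_moved P_U xU by blast
  finally have e: "{i \<in> U. sB y k T i \<noteq> id i} = insert x P" .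
  have fT: "finite (\<Union>T)" using UT_sub[OF T'] fin_S finite_subset by blast
  have "card (insert x P) = card P + 1" using x_arc x_UT fT fin_arc by simp
  also have "card P = ssum T + k" using card_Un_disjoint[OF fT fin_arc arc_UT] ssum_card[OF T'] card_arc by simp
  finally show ?thesis using e by (simp add: hamming_def)
qed

lemma sB_dp_set: "{i \<in> U. sB y k T i \<noteq> p i} = S - P"
proof -
  have "sB y k T i \<noteq> p i \<longleftrightarrow> i \<in> S - P" if "i \<in> U" for i
  proof (cases "i = x")
    case True then show ?thesis using sB_x px_ne_y xS x_arc x_UT by auto
  next
    case False
    show ?thesis
    proof (cases "i \<in> P")
      case True then show ?thesis using sB_P by simp
    next
      case F2: False then show ?thesis using sB_rest[OF F2 False] by (auto simp: S_def)
    qed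
  qed
  then show ?thesis using S_sub by blast
qed

lemma sB_d_p: "hamming n (sB y k T) p = card S - (ssum T + k)"
proof -
  have fT: "finite (\<Union>T)" using UT_sub[OF T'] fin_S finite_subset by blast
  have "card P = ssum T + k" using card_Un_disjoint[OF fT fin_arc arc_UT] ssum_card[OF T'] card_arc by simp
  moreover have "finite P" using P_S fin_S finite_subset by blast
  ultimately show ?thesis unfolding hamming_def sB_dp_set using P_S
    by (simp add: card_Diff_subset)
qed

lemma sB_both: "{i. sB y k T i \<noteq> i \<and> sB y k T i \<noteq> p i} = {x}"
proof -
  have "sB y k T i \<noteq> i \<and> sB y k T i \<noteq> p i \<longleftrightarrow> i = x" for i
  proof (cases "i = x")
    case True then show ?thesis using sB_x px_ne_y x_ne_y by auto
  next
    case False then show ?thesis using sB_P sB_rest by (cases "i \<in> P") auto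
  qed
  then show ?thesis by blast
qed

end

locale pctx2 = pctx +
  fixes r :: nat
  assumes cS: "card S + 1 = 2 * r"
begin

definition "X = ball_r n r p \<inter> ball_r n r id"
definition "XA = {\<sigma> \<in> X. \<forall>i. \<sigma> i = i \<or> \<sigma> i = p i}"
definition "PA = {T. T \<subseteq> Os \<and> r \<le> ssum T + 1 \<and> ssum T \<le> r}"

lemma X_iff: "\<sigma> \<in> X \<longleftrightarrow> \<sigma> \<in> Sym n \<and> hamming n \<sigma> p \<le> r \<and> hamming n \<sigma> id \<le> r"
  unfolding X_def ball_r_def by blast

lemma bijA: "bij_betw sA PA XA"
proof (rule bij_betwI')
  fix T1 T2 assume "T1 \<in> PA" "T2 \<in> PA"
  then have T: "T1 \<subseteq> Os" "T2 \<subseteq> Os" by (auto simp: PA_def)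
  show "(sA T1 = sA T2) = (T1 = T2)"
  proof
    assume "sA T1 = sA T2"
    then have "\<Union>T1 = \<Union>T2" using sA_moved[OF T(1)] sA_moved[OF T(2)] by simp
    then show "T1 = T2" using union_inj T by blast
  qed simp
next
  fix T assume T: "T \<in> PA"
  then have T': "T \<subseteq> Os" by (simp add: PA_def)
  have "sA T \<in> X" unfolding X_iff using sA_Sym[OF T'] sA_d_id[OF T'] sA_d_p[OF T'] T cS
    by (auto simp: PA_def)
  then show "sA T \<in> XA" unfolding XA_def sA_def by auto
next
  fix \<sigma> assume s: "\<sigma> \<in> XA"
  then have sX: "\<sigma> \<in> X" and s2: "\<And>i. \<sigma> i = i \<or> \<sigma> i = p i" by (auto simp: XA_def)
  have sS: "\<sigma> \<in> Sym n" using sX X_iff by blast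
  define A where "A = {i. \<sigma> i \<noteq> i}"
  have AS: "A \<subseteq> S" unfolding A_def S_def using s2 by force
  have Acl: "p i \<in> A" if "i \<in> A" for i
  proof (rule ccontr)
    assume "p i \<notin> A"
    then have "\<sigma> (p i) = \<sigma> i" using that s2[of i] by (auto simp: A_def)
    then have "p i = i" using Sym_inj[OF sS] by (auto dest: injD)
    then show False using that s2[of i] by (auto simp: A_def)
  qed
  define T where "T = {C \<in> Os. C \<subseteq> A}"
  have T': "T \<subseteq> Os" by (simp add: T_def)
  have UT: "\<Union>T = A" unfolding T_def by (rule closed_union[OF AS Acl])
  have eq: "\<sigma> = sA T"
  proof
    fix i show "\<sigma> i = sA T i" unfolding sA_def UT using s2[of i] by (auto simp: A_def)
  qed
  have "hamming n \<sigma> id \<le> r" "hamming n \<sigma> p \<le> r" using sX X_iff by auto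
  then have "T \<in> PA" unfolding eq sA_d_id[OF T'] sA_d_p[OF T'] PA_def using T' cS by auto
  then show "\<exists>T\<in>PA. \<sigma> = sA T" using eq by blast
qed

lemma card_XA: "card XA = card PA" using bij_betw_same_card[OF bijA] by simp


lemma X_Sym: "\<sigma> \<in> X \<Longrightarrow> \<sigma> \<in> Sym n" using X_iff by blast

lemma XB_struct:
  assumes sX: "\<sigma> \<in> X" and x1: "\<sigma> x \<noteq> x" and x2: "\<sigma> x \<noteq> p x"
  shows "\<exists>y k T. y \<in> S \<and> T \<subseteq> Os - {orbit p y} \<and> 1 \<le> k \<and> k + 2 \<le> per y
            \<and> ssum T + k + 1 = r \<and> \<sigma> = sB y k T"
proof -
  have sS: "\<sigma> \<in> Sym n" using sX by (rule X_Sym)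
  have sinj: "inj \<sigma>" using Sym_inj[OF sS] .
  have seq: "\<sigma> a = \<sigma> b \<longleftrightarrow> a = b" for a b using sinj by (auto dest: injD)
  have sout: "i \<notin> U \<Longrightarrow> \<sigma> i = i" for i using Sym_out[OF sS] .
  have sU: "i \<in> U \<Longrightarrow> \<sigma> i \<in> U" for i using permutes_in_image[of \<sigma> U i] sS by (simp add: Sym_def)
  define D where "D = {i \<in> U. \<sigma> i \<noteq> i}"
  define E where "E = {i \<in> U. \<sigma> i \<noteq> p i}"
  have hD: "card D \<le> r" using sX X_iff unfolding hamming_def D_def by simp
  have hE: "card E \<le> r" using sX X_iff unfolding hamming_def E_def by simp
  have fD: "finite D" and fE: "finite E" unfolding D_def E_def by simp_all
  have xU: "x \<in> U" using sout x1 by blast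
  have xDE: "x \<in> D \<inter> E" using xU x1 x2 by (simp add: D_def E_def)
  have UDE: "D \<union> E = S \<union> (D - S)"
  proof
    show "D \<union> E \<subseteq> S \<union> (D - S)" unfolding D_def E_def S_def by auto
    show "S \<union> (D - S) \<subseteq> D \<union> E" using S_sub unfolding D_def E_def S_def by auto
  qed
  have cU: "card (D \<union> E) = card S + card (D - S)"
    unfolding UDE by (rule card_Un_disjoint) (use fin_S fD in auto)
  have DSsub: "(D - S) \<subseteq> D \<inter> E" unfolding D_def E_def S_def by auto
  have ci: "card D + card E = card (D \<union> E) + card (D \<inter> E)" using card_Un_Int[OF fD fE] .
  have DS: "D \<subseteq> S"
  proof (rule ccontr)
    assume "\<not> D \<subseteq> S"
    then have "D - S \<noteq> {}" by blast
    then have "1 \<le> card (D - S)" using fD by (simp add: Suc_le_eq card_gt_0_iff)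
    moreover have "1 \<le> card (D \<inter> E)" using xDE fD by (simp add: Suc_le_eq card_gt_0_iff) blast
    ultimately show False using ci cU hD hE cS by linarith
  qed
  then have "D - S = {}" by blast
  then have "card (D - S) = 0" by (metis card.empty)
  then have cDE: "card (D \<inter> E) \<le> 1" using ci cU hD hE cS by linarith
  have DE: "D \<inter> E = {x}"
  proof -
    have "finite (D \<inter> E)" using fD by simp
    then have "\<forall>a\<in>D \<inter> E. \<forall>b\<in>D \<inter> E. a = b" using card_le_Suc0_iff_eq[of "D \<inter> E"] cDE by simp
    then show ?thesis using xDE by blast
  qed
  have "card (D \<inter> E) = 1" using DE by simp
  then have cD: "card D = r" using ci cU hD hE cS \<open>card (D - S) = 0\<close> by linarith
  define A where "A = D - {x}"
  have fA: "finite A" using fD by (simp add: A_def)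
  have "0 < card D" using fD xDE by (auto simp: card_gt_0_iff)
  then have cA: "card A + 1 = r" using cD xDE fD by (simp add: A_def)
  have As: "\<sigma> i = p i" if i: "i \<in> A" for i
  proof -
    have "i \<in> D" "i \<noteq> x" using i by (auto simp: A_def)
    then have "i \<notin> E" "i \<in> U" using DE by (auto simp: D_def)
    then show ?thesis by (simp add: E_def)
  qed
  have AD: "A \<subseteq> D" by (auto simp: A_def)
  have nD: "i \<notin> D \<Longrightarrow> \<sigma> i = i" for i using sout unfolding D_def by blast
  define y where "y = \<sigma> x"
  have yx: "y \<noteq> x" using x1 by (simp add: y_def)
  have yD: "y \<in> D"
  proof -
    have "\<sigma> y \<noteq> y" using seq[of y x] yx by (simp add: y_def)
    moreover have "y \<in> U" using sU[OF xU] by (simp add: y_def)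
    ultimately show ?thesis by (simp add: D_def)
  qed
  have yA: "y \<in> A" using yD yx by (simp add: A_def)
  have pA: "p i \<in> D" if i: "i \<in> A" for i
  proof -
    have iD: "i \<in> D" using i by (simp add: A_def)
    have "\<sigma> (p i) \<noteq> p i"
    proof
      assume "\<sigma> (p i) = p i"
      then have "\<sigma> (\<sigma> i) = \<sigma> i" using As[OF i] by simp
      then have "\<sigma> i = i" using seq by blast
      then show False using iD by (simp add: D_def)
    qed
    moreover have "p i \<in> U" using pU iD by (simp add: D_def)
    ultimately show ?thesis by (simp add: D_def)
  qed
  have pAy: "p i \<noteq> y" if i: "i \<in> A" for i
  proof
    assume "p i = y"
    then have "\<sigma> i = \<sigma> x" using As[OF i] by (simp add: y_def)
    then have "i = x" using seq by blast
    then show False using i by (simp add: A_def)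
  qed
  have AS: "A \<subseteq> S" using AD DS by blast
  have xS: "x \<in> S" using xDE DS by blast
  have yS: "y \<in> S" using yA AS by blast
  define m where "m = per y"
  have iter: "(\<forall>i\<le>j. (p ^^ i) y \<noteq> x) \<longrightarrow> (p ^^ j) y \<in> A" for j
  proof (induction j)
    case 0 then show ?case using yA by simp
  next
    case (Suc j)
    show ?case
    proof
      assume h: "\<forall>i\<le>Suc j. (p ^^ i) y \<noteq> x"
      then have "(p ^^ j) y \<in> A" using Suc by simp
      then have "p ((p ^^ j) y) \<in> D" by (rule pA)
      moreover have "p ((p ^^ j) y) \<noteq> x" using h by (metis funpow.simps(2) o_apply order_refl)
      ultimately show "(p ^^ Suc j) y \<in> A" by (simp add: A_def)
    qed
  qed
  have ex: "\<exists>j<m. (p ^^ j) y = x"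
  proof (rule ccontr)
    assume "\<not> (\<exists>j<m. (p ^^ j) y = x)"
    then have "(p ^^ (m - 1)) y \<in> A" using iter[of "m - 1"] per_pos[of y] by (auto simp: m_def)
    moreover have "p ((p ^^ (m - 1)) y) = y"
    proof -
      have "p ((p ^^ (m - 1)) y) = (p ^^ Suc (m - 1)) y" by simp
      also have "Suc (m - 1) = m" using per_pos[of y] by (simp add: m_def)
      finally show ?thesis using per_period by (simp add: m_def)
    qed
    ultimately show False using pAy by blast
  qed
  define k where "k = (LEAST j. (p ^^ j) y = x)"
  have kx: "(p ^^ k) y = x" unfolding k_def using ex by (metis (mono_tags, lifting) LeastI)
  have km: "k < m"
  proof -
    obtain j where j: "j < m" "(p ^^ j) y = x" using ex by blast
    have "k \<le> j" unfolding k_def by (rule Least_le) (rule j(2))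
    then show ?thesis using j(1) by simp
  qed
  have kmin: "j < k \<Longrightarrow> (p ^^ j) y \<noteq> x" for j unfolding k_def by (rule not_less_Least)
  have k1: "1 \<le> k"
  proof (rule ccontr)
    assume "\<not> 1 \<le> k" then have "k = 0" by simp
    then show False using kx yx by simp
  qed
  have k2: "k + 2 \<le> m"
  proof (rule ccontr)
    assume "\<not> k + 2 \<le> m"
    then have "Suc k = m" using km by simp
    then have "p x = y" using kx per_period[of y] by (metis funpow.simps(2) o_apply m_def)
    then show False using x2 by (simp add: y_def)
  qed
  have arcA: "arc y k \<subseteq> A"
  proof
    fix z assume "z \<in> arc y k"
    then obtain j where j: "j < k" "z = (p ^^ j) y" unfolding arc_def by auto
    have "\<forall>i\<le>j. (p ^^ i) y \<noteq> x" using kmin j(1) by simp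
    then show "z \<in> A" using iter[of j] j by simp
  qed
  define R where "R = A - arc y k"
  have Rcl: "p i \<in> R" if i: "i \<in> R" for i
  proof -
    have iA: "i \<in> A" and ia: "i \<notin> arc y k" using i by (auto simp: R_def)
    have "p i \<noteq> x"
    proof
      assume "p i = x"
      then have "p i = p ((p ^^ (k - 1)) y)" using kx k1
        by (metis Suc_diff_1 funpow.simps(2) o_apply less_le_trans zero_less_one)
      then have "i = (p ^^ (k - 1)) y" using p_eq_iff by blast
      moreover have "(p ^^ (k - 1)) y \<in> arc y k" unfolding arc_def using k1 by auto
      ultimately show False using ia by simp
    qed
    then have "p i \<in> A" using pA[OF iA] by (simp add: A_def)
    moreover have "p i \<notin> arc y k"
    proof
      assume "p i \<in> arc y k"
      then obtain j where j: "j < k" "p i = (p ^^ j) y" unfolding arc_def by auto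
      show False
      proof (cases j)
        case 0 then show False using j pAy[OF iA] by simp
      next
        case (Suc j')
        then have "p i = p ((p ^^ j') y)" using j by simp
        then have "i = (p ^^ j') y" using p_eq_iff by blast
        moreover have "(p ^^ j') y \<in> arc y k" unfolding arc_def using j Suc by auto
        ultimately show False using ia by simp
      qed
    qed
    ultimately show ?thesis by (simp add: R_def)
  qed
  have RS: "R \<subseteq> S" using AS by (auto simp: R_def)
  have Rit: "z \<in> R \<Longrightarrow> (p ^^ j) z \<in> R" for z j by (induction j) (simp_all add: Rcl)
  have Rdisj: "R \<inter> orbit p y = {}"
  proof (rule ccontr)
    assume "R \<inter> orbit p y \<noteq> {}"
    then obtain z where z: "z \<in> R" "z \<in> orbit p y" by blast
    have "orbit p z = orbit p y" by (rule orb_eq[OF z(2)])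
    moreover have "x \<in> orbit p y" using kx orb_funpow by metis
    ultimately have "x \<in> orbit p z" by simp
    then obtain j where "x = (p ^^ j) z" using per_orb by blast
    then have "x \<in> R" using Rit[OF z(1)] by simp
    then show False by (simp add: R_def A_def)
  qed
  define T where "T = {C \<in> Os. C \<subseteq> R}"
  have UT: "\<Union>T = R" unfolding T_def by (rule closed_union[OF RS Rcl])
  have TO: "T \<subseteq> Os - {orbit p y}"
  proof
    fix C assume C: "C \<in> T"
    then have "C \<in> Os" "C \<subseteq> R" by (auto simp: T_def)
    moreover have "C \<noteq> orbit p y"
    proof
      assume "C = orbit p y"
      then have "y \<in> R" using \<open>C \<subseteq> R\<close> self_orb by blast
      then show False using Rdisj self_orb by blast
    qed
    ultimately show "C \<in> Os - {orbit p y}" by simp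
  qed
  have ca: "card (arc y k) = k"
  proof -
    have "inj_on (\<lambda>j. (p ^^ j) y) {..<k}"
    proof (rule inj_onI)
      fix a b assume "a \<in> {..<k}" "b \<in> {..<k}" "(p ^^ a) y = (p ^^ b) y"
      then show "a = b" using per_inj[of a y b] km by (simp add: m_def)
    qed
    then show ?thesis unfolding arc_def by (simp add: card_image)
  qed
  have sT: "ssum T = card R" using ssum_card[of T] TO UT by auto
  have cR: "card R + k = card A" unfolding R_def using card_Diff_subset[OF _ arcA] ca fA
    by (metis arcA card_mono finite_subset le_add_diff_inverse2)
  have eq: "\<sigma> = sB y k T"
  proof
    fix i
    show "\<sigma> i = sB y k T i"
    proof (cases "i = x")
      case True then show ?thesis using kx by (simp add: sB_def y_def)
    next
      case False
      show ?thesis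
      proof (cases "i \<in> A")
        case True
        then have "i \<in> \<Union>T \<union> arc y k" using UT by (auto simp: R_def)
        then show ?thesis using False kx As[OF True] by (simp add: sB_def)
      next
        case F2: False
        then have "i \<notin> D" using False by (simp add: A_def)
        moreover have "i \<notin> \<Union>T \<union> arc y k" using F2 UT arcA by (auto simp: R_def)
        ultimately show ?thesis using False kx nD by (simp add: sB_def)
      qed
    qed
  qed
  show ?thesis
    apply (rule exI[of _ y], rule exI[of _ k], rule exI[of _ T])
    using yS TO k1 k2 sT cR cA eq by (simp add: m_def)
qed


definition "XB = X - XA"
definition "Tset y = {T. T \<subseteq> Os - {orbit p y} \<and> r + 1 \<le> ssum T + per y \<and> ssum T + 2 \<le> r}"
definition "Tset' C = {T. T \<subseteq> Os - {C} \<and> r + 1 \<le> ssum T + card C \<and> ssum T + 2 \<le> r}"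
definition "PB = Sigma S Tset"
definition "gB = (\<lambda>(y, T). sB y (r - 1 - ssum T) T)"

lemma mk_vB:
  assumes "y \<in> S" "T \<subseteq> Os - {orbit p y}" "1 \<le> k" "k + 2 \<le> per y"
  shows "vB p n y k T"
  using assms pctx_axioms by (simp add: vB_def vB_axioms_def)

lemma PB_vB:
  assumes "(y, T) \<in> PB"
  shows "vB p n y (r - 1 - ssum T) T" and "ssum T + (r - 1 - ssum T) + 1 = r"
proof -
  have h: "y \<in> S" "T \<subseteq> Os - {orbit p y}" "r + 1 \<le> ssum T + per y" "ssum T + 2 \<le> r"
    using assms by (auto simp: PB_def Tset_def)
  show "vB p n y (r - 1 - ssum T) T" using h by (intro mk_vB) auto
  show "ssum T + (r - 1 - ssum T) + 1 = r" using h by auto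
qed

lemma gB_in:
  assumes yT: "(y, T) \<in> PB"
  shows "gB (y, T) \<in> XB"
proof -
  define k where "k = r - 1 - ssum T"
  interpret V: vB p n y k T using PB_vB(1)[OF yT] unfolding k_def .
  have e: "ssum T + k + 1 = r" using PB_vB(2)[OF yT] unfolding k_def .
  have "sB y k T \<in> X" unfolding X_iff using V.sB_Sym V.sB_d_id V.sB_d_p e cS by auto
  moreover have "sB y k T \<notin> XA"
  proof
    assume "sB y k T \<in> XA"
    then have "sB y k T ((p^^k) y) = (p^^k) y \<or> sB y k T ((p^^k) y) = p ((p^^k) y)" unfolding XA_def by blast
    then show False using V.sB_x V.x_ne_y V.px_ne_y by auto
  qed
  ultimately show ?thesis unfolding gB_def XB_def k_def by simp
qed

lemma gB_inj:
  assumes a: "(y1, T1) \<in> PB" and b: "(y2, T2) \<in> PB" and e: "gB (y1, T1) = gB (y2, T2)"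
  shows "y1 = y2 \<and> T1 = T2"
proof -
  define k1 where "k1 = r - 1 - ssum T1"
  define k2 where "k2 = r - 1 - ssum T2"
  interpret V1: vB p n y1 k1 T1 using PB_vB(1)[OF a] unfolding k1_def .
  interpret V2: vB p n y2 k2 T2 using PB_vB(1)[OF b] unfolding k2_def .
  have e': "sB y1 k1 T1 = sB y2 k2 T2" using e unfolding gB_def k1_def k2_def by simp
  have "{(p^^k1) y1} = {(p^^k2) y2}" using V1.sB_both V2.sB_both e' by simp
  then have xx: "(p^^k1) y1 = (p^^k2) y2" by simp
  have yy: "y1 = y2" using V1.sB_x V2.sB_x e' xx by metis
  have kk: "k1 = k2"
    using per_inj[of k1 y1 k2] xx yy V1.k2 V2.k2 by simp
  have "insert ((p^^k1) y1) (\<Union>T1 \<union> arc y1 k1) = insert ((p^^k1) y1) (\<Union>T2 \<union> arc y1 k1)"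
    using V1.sB_moved V2.sB_moved e' xx yy kk by simp
  moreover have "(p^^k1) y1 \<notin> \<Union>T1 \<union> arc y1 k1" using V1.x_arc V1.x_UT by blast
  moreover have "(p^^k1) y1 \<notin> \<Union>T2 \<union> arc y1 k1" using V1.x_arc V2.x_UT xx by auto
  ultimately have "\<Union>T1 \<union> arc y1 k1 = \<Union>T2 \<union> arc y1 k1" using insert_ident by metis
  then have "\<Union>T1 = \<Union>T2" using V1.arc_UT V2.arc_UT yy kk by blast
  then have "T1 = T2" using union_inj V1.T' V2.T' by blast
  then show ?thesis using yy by simp
qed

lemma bijB: "bij_betw gB PB XB"
proof (rule bij_betwI')
  fix a b assume "a \<in> PB" "b \<in> PB"
  moreover obtain y1 T1 y2 T2 where "a = (y1, T1)" "b = (y2, T2)" by (cases a, cases b) auto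
  ultimately show "(gB a = gB b) = (a = b)" using gB_inj[of y1 T1 y2 T2] by auto
next
  fix a assume "a \<in> PB"
  moreover obtain y1 T1 where "a = (y1, T1)" by (cases a) auto
  ultimately show "gB a \<in> XB" using gB_in by simp
next
  fix \<sigma> assume s: "\<sigma> \<in> XB"
  then have sX: "\<sigma> \<in> X" and "\<sigma> \<notin> XA" by (auto simp: XB_def)
  then obtain x where x: "\<sigma> x \<noteq> x" "\<sigma> x \<noteq> p x" unfolding XA_def by blast
  obtain y k T where h: "y \<in> S" "T \<subseteq> Os - {orbit p y}" "1 \<le> k" "k + 2 \<le> per y"
    "ssum T + k + 1 = r" "\<sigma> = sB y k T" using XB_struct[OF sX x] by blast
  have "(y, T) \<in> PB" using h by (auto simp: PB_def Tset_def)
  moreover have "k = r - 1 - ssum T" using h(5) by simp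
  then have "\<sigma> = gB (y, T)" using h(6) by (simp add: gB_def)
  ultimately show "\<exists>a\<in>PB. \<sigma> = gB a" by blast
qed

lemma fin_Sym: "finite (Sym n)" unfolding Sym_def by (rule finite_permutations) simp

lemma fin_X: "finite X"
proof -
  have "X \<subseteq> Sym n" using X_Sym by blast
  then show ?thesis by (rule finite_subset) (rule fin_Sym)
qed

lemma card_X_split: "card X = card XA + card XB"
proof -
  have "XA \<subseteq> X" by (auto simp: XA_def)
  moreover have "finite XA" using fin_X \<open>XA \<subseteq> X\<close> by (rule finite_subset[rotated])
  ultimately show ?thesis unfolding XB_def using card_Diff_subset[of XA X] card_mono[OF fin_X, of XA]
    by simp
qed

lemma fin_Tset: "finite (Tset y)"
proof -
  have "Tset y \<subseteq> Pow Os" by (auto simp: Tset_def)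
  then show ?thesis using fin_O finite_subset by blast
qed

lemma Tset_eq: assumes "C \<in> Os" "y \<in> C" shows "Tset y = Tset' C"
proof -
  have "C = orbit p y" using O_of[OF assms] .
  then show ?thesis unfolding Tset_def Tset'_def per_def by simp
qed

lemma card_PB: "card PB = (\<Sum>C\<in>Os. card C * card (Tset' C))"
proof -
  have "card PB = (\<Sum>y\<in>S. card (Tset y))" unfolding PB_def using fin_S fin_Tset by simp
  also have "\<dots> = (\<Sum>y\<in>\<Union>Os. card (Tset y))" using Union_O by simp
  also have "\<dots> = (\<Sum>C\<in>Os. \<Sum>y\<in>C. card (Tset y))"
  proof -
    have "\<forall>A\<in>Os. finite A" using O_fin by blast
    moreover have "\<forall>A\<in>Os. \<forall>B\<in>Os. A \<noteq> B \<longrightarrow> A \<inter> B = {}" using O_disj by blast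
    ultimately show ?thesis using sum.Union_disjoint[of Os "\<lambda>y. card (Tset y)"] by simp
  qed
  also have "\<dots> = (\<Sum>C\<in>Os. card C * card (Tset' C))"
  proof (rule sum.cong)
    fix C assume C: "C \<in> Os"
    have "(\<Sum>y\<in>C. card (Tset y)) = (\<Sum>y\<in>C. card (Tset' C))" using Tset_eq[OF C] by simp
    then show "(\<Sum>y\<in>C. card (Tset y)) = card C * card (Tset' C)" by simp
  qed simp
  finally show ?thesis .
qed

theorem card_X: "card X = card PA + (\<Sum>C\<in>Os. card C * card (Tset' C))"
  using card_X_split card_XA bij_betw_same_card[OF bijB] card_PB by simp

end


definition cntP :: "nat set set \<Rightarrow> (nat \<Rightarrow> bool) \<Rightarrow> nat" where
  "cntP F P = card {T. T \<subseteq> F \<and> P (\<Sum>C\<in>T. card C)}"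

lemma cnt_insert:
  assumes F: "finite F" and L: "L \<notin> F"
  shows "cntP (insert L F) P = cntP F P + cntP F (\<lambda>v. P (v + card L))"
proof -
  define A where "A = {T. T \<subseteq> F \<and> P (\<Sum>C\<in>T. card C)}"
  define B where "B = {T. T \<subseteq> F \<and> P ((\<Sum>C\<in>T. card C) + card L)}"
  have eq: "{T. T \<subseteq> insert L F \<and> P (\<Sum>C\<in>T. card C)} = A \<union> insert L ` B"
  proof (intro set_eqI iffI)
    fix T assume T: "T \<in> {T. T \<subseteq> insert L F \<and> P (\<Sum>C\<in>T. card C)}"
    show "T \<in> A \<union> insert L ` B"
    proof (cases "L \<in> T")
      case False then show ?thesis using T by (auto simp: A_def)
    next
      case True
      have "T \<subseteq> insert L F" using T by simp
      then have fT: "finite T" using F finite_insert finite_subset by metis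
      have "(\<Sum>C\<in>T. card C) = card L + (\<Sum>C\<in>T - {L}. card C)"
        using sum.remove[OF fT True] .
      then have "(\<Sum>C\<in>T. card C) = (\<Sum>C\<in>T - {L}. card C) + card L" by simp
      then have "T - {L} \<in> B" using T by (auto simp: B_def)
      moreover have "T = insert L (T - {L})" using True by blast
      ultimately show ?thesis by blast
    qed
  next
    fix T assume "T \<in> A \<union> insert L ` B"
    then show "T \<in> {T. T \<subseteq> insert L F \<and> P (\<Sum>C\<in>T. card C)}"
    proof
      assume "T \<in> A" then show ?thesis by (auto simp: A_def)
    next
      assume "T \<in> insert L ` B"
      then obtain T' where T': "T' \<in> B" "T = insert L T'" by blast
      have "L \<notin> T'" using T' L by (auto simp: B_def)
      moreover have "finite T'" using T' F finite_subset by (auto simp: B_def)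
      ultimately have "(\<Sum>C\<in>T. card C) = (\<Sum>C\<in>T'. card C) + card L" using T' by simp
      then show ?thesis using T' by (auto simp: B_def)
    qed
  qed
  have fA: "finite A" using F by (auto simp: A_def)
  have fB: "finite B" using F by (auto simp: B_def)
  have disj: "A \<inter> insert L ` B = {}" using L by (auto simp: A_def)
  have inj: "inj_on (insert L) B" using L by (auto simp: B_def inj_on_def)
  have "card (A \<union> insert L ` B) = card A + card B"
    using card_Un_disjoint[OF fA finite_imageI[OF fB] disj] card_image[OF inj] by simp
  then show ?thesis unfolding cntP_def eq A_def B_def by simp
qed

lemma cnt_twos:
  assumes F: "finite F" and two: "\<And>C. C \<in> F \<Longrightarrow> card C = 2"
  shows "cntP F P = (\<Sum>j\<in>{j. j \<le> card F \<and> P (2*j)}. card F choose j)"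
proof -
  have ss: "(\<Sum>C\<in>T. card C) = 2 * card T" if "T \<subseteq> F" for T
  proof -
    have "(\<Sum>C\<in>T. card C) = (\<Sum>C\<in>T. 2)" by (rule sum.cong) (use that two in auto)
    then show ?thesis by simp
  qed
  define J where "J = {j. j \<le> card F \<and> P (2*j)}"
  have eq: "{T. T \<subseteq> F \<and> P (\<Sum>C\<in>T. card C)} = (\<Union>j\<in>J. {T. T \<subseteq> F \<and> card T = j})"
  proof (intro set_eqI iffI)
    fix T assume "T \<in> {T. T \<subseteq> F \<and> P (\<Sum>C\<in>T. card C)}"
    then have "T \<subseteq> F" "P (2 * card T)" using ss by auto
    moreover have "card T \<le> card F" using \<open>T \<subseteq> F\<close> F by (rule card_mono[rotated])
    ultimately show "T \<in> (\<Union>j\<in>J. {T. T \<subseteq> F \<and> card T = j})" by (auto simp: J_def)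
  next
    fix T assume "T \<in> (\<Union>j\<in>J. {T. T \<subseteq> F \<and> card T = j})"
    then show "T \<in> {T. T \<subseteq> F \<and> P (\<Sum>C\<in>T. card C)}" using ss by (auto simp: J_def)
  qed
  have fJ: "finite J" by (auto simp: J_def)
  have "card (\<Union>j\<in>J. {T. T \<subseteq> F \<and> card T = j}) = (\<Sum>j\<in>J. card {T. T \<subseteq> F \<and> card T = j})"
    by (rule card_UN_disjoint) (use fJ F in auto)
  also have "\<dots> = (\<Sum>j\<in>J. card F choose j)" using n_subsets[OF F] by simp
  finally show ?thesis unfolding cntP_def eq J_def .
qed

lemma cnt_W:
  assumes F: "finite F" and two0: "\<forall>C\<in>F. card C = 2"
    and P0: "\<forall>j. P (2*j) \<longleftrightarrow> (a \<le> int j \<and> int j \<le> b)"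
  shows "int (cntP F P) = W (card F) a b"
proof -
  have P: "P (2*j) \<longleftrightarrow> (a \<le> int j \<and> int j \<le> b)" for j using P0 by blast
  have two: "\<And>C. C \<in> F \<Longrightarrow> card C = 2" using two0 by blast
  define q where "q = card F"
  define J where "J = {j. j \<le> q \<and> P (2*j)}"
  have "int (cntP F P) = (\<Sum>j\<in>J. int (q choose j))" using cnt_twos[OF F two, of P] unfolding J_def q_def by simp
  also have "\<dots> = (\<Sum>j\<in>J. Cz q (int j))" by (simp add: Cz_def)
  also have "\<dots> = (\<Sum>i\<in>int ` J. Cz q i)" by (simp add: sum.reindex)
  also have "int ` J = {i \<in> {a..b}. 0 \<le> i \<and> i \<le> int q}"
  proof (intro set_eqI iffI)
    fix i assume "i \<in> int ` J" then show "i \<in> {i \<in> {a..b}. 0 \<le> i \<and> i \<le> int q}"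
      using P by (auto simp: J_def)
  next
    fix i assume i: "i \<in> {i \<in> {a..b}. 0 \<le> i \<and> i \<le> int q}"
    then have "nat i \<in> J" using P[of "nat i"] by (auto simp: J_def)
    moreover have "i = int (nat i)" using i by simp
    ultimately show "i \<in> int ` J" by blast
  qed
  also have "(\<Sum>i\<in>{i \<in> {a..b}. 0 \<le> i \<and> i \<le> int q}. Cz q i) = W q a b"
    unfolding W_def by (rule sum.mono_neutral_left) (auto simp: Cz_def binomial_eq_0)
  finally show ?thesis by (simp add: q_def)
qed

lemma cnt_zero:
  assumes "\<And>T. T \<subseteq> F \<Longrightarrow> \<not> P (\<Sum>C\<in>T. card C)"
  shows "cntP F P = 0"
proof -
  have "{T. T \<subseteq> F \<and> P (\<Sum>C\<in>T. card C)} = {}" using assms by blast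
  then show ?thesis unfolding cntP_def by (metis card.empty)
qed


lemma decode1:
  assumes F: "finite F" and e: "image_mset card (mset_set F) = add_mset a M"
  shows "\<exists>L\<in>F. card L = a \<and> image_mset card (mset_set (F - {L})) = M"
proof -
  have "a \<in># image_mset card (mset_set F)" using e by simp
  then obtain L where L: "L \<in># mset_set F" "card L = a" by auto
  then have LF: "L \<in> F" using F by simp
  have "mset_set (F - {L}) = mset_set F - {#L#}" using F LF by (simp add: mset_set_Diff)
  then have "image_mset card (mset_set (F - {L})) = image_mset card (mset_set F) - {#card L#}"
    using L(1) by (simp add: image_mset_Diff)
  then show ?thesis using LF L(2) e by auto
qed

lemma decode2:
  assumes F: "finite F" and e: "image_mset card (mset_set F) = replicate_mset q 2"
  shows "(\<forall>C\<in>F. card C = 2) \<and> card F = q"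
proof
  show "\<forall>C\<in>F. card C = 2"
  proof
    fix C assume "C \<in> F"
    then have "card C \<in># image_mset card (mset_set F)" using F by simp
    then show "card C = 2" using e by (auto split: if_splits)
  qed
  have "size (image_mset card (mset_set F)) = q" using e by simp
  then show "card F = q" by simp
qed

lemma cnt_of:
  "card {T. T \<subseteq> F \<and> P (\<Sum>C\<in>T. card C)} = cntP F P" by (simp add: cntP_def)

context pctx2
begin

lemma card_PA: "card PA = cntP Os (\<lambda>v. r \<le> v + 1 \<and> v \<le> r)"
  unfolding PA_def ssum_def cntP_def by simp

lemma card_Tset': "card (Tset' C) = cntP (Os - {C}) (\<lambda>v. r + 1 \<le> v + card C \<and> v + 2 \<le> r)"
  unfolding Tset'_def ssum_def cntP_def by simp

lemma Tset'_two: "card C = 2 \<Longrightarrow> card (Tset' C) = 0"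
  unfolding card_Tset' by (rule cnt_zero) simp

lemma sum_rest0:
  assumes "\<forall>C\<in>A. card C = 2"
  shows "(\<Sum>C\<in>A. card C * card (Tset' C)) = 0"
  using assms Tset'_two by simp

lemma eval_odd_X:
  assumes L: "L \<in> Os" and two: "\<forall>C\<in>Os - {L}. card C = 2"
  shows "card X = cntP (Os - {L}) (\<lambda>v. r \<le> v + 1 \<and> v \<le> r)
     + cntP (Os - {L}) (\<lambda>v. r \<le> v + card L + 1 \<and> v + card L \<le> r)
     + card L * cntP (Os - {L}) (\<lambda>v. r + 1 \<le> v + card L \<and> v + 2 \<le> r)"
proof -
  have OL: "Os = insert L (Os - {L})" using L by blast
  have fR: "finite (Os - {L})" using fin_O by simp
  have "card PA = cntP (insert L (Os - {L})) (\<lambda>v. r \<le> v + 1 \<and> v \<le> r)" using card_PA OL by simp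
  also have "\<dots> = cntP (Os - {L}) (\<lambda>v. r \<le> v + 1 \<and> v \<le> r)
     + cntP (Os - {L}) (\<lambda>v. r \<le> v + card L + 1 \<and> v + card L \<le> r)"
    by (subst cnt_insert[OF fR]) (simp_all add: add.assoc)
  finally have a: "card PA = \<dots>" .
  have "(\<Sum>C\<in>Os. card C * card (Tset' C)) = card L * card (Tset' L) + (\<Sum>C\<in>Os - {L}. card C * card (Tset' C))"
    using sum.remove[OF fin_O L] .
  also have "(\<Sum>C\<in>Os - {L}. card C * card (Tset' C)) = 0" using sum_rest0 two by blast
  finally have b: "(\<Sum>C\<in>Os. card C * card (Tset' C)) = card L * cntP (Os - {L}) (\<lambda>v. r + 1 \<le> v + card L \<and> v + 2 \<le> r)"
    using card_Tset' by simp
  show ?thesis using card_X a b by simp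
qed

lemma eval_even_X:
  assumes L: "L \<in> Os" and Th: "Th \<in> Os" and LT: "L \<noteq> Th" and c3: "card Th = 3"
    and two: "\<forall>C\<in>Os - {L, Th}. card C = 2"
  defines "Two \<equiv> Os - {L, Th}"
  shows "card X = cntP Two (\<lambda>v. r \<le> v + 1 \<and> v \<le> r)
     + cntP Two (\<lambda>v. r \<le> v + 3 + 1 \<and> v + 3 \<le> r)
     + cntP Two (\<lambda>v. r \<le> v + card L + 1 \<and> v + card L \<le> r)
     + cntP Two (\<lambda>v. r \<le> v + 3 + card L + 1 \<and> v + 3 + card L \<le> r)
     + card L * (cntP Two (\<lambda>v. r + 1 \<le> v + card L \<and> v + 2 \<le> r)
                 + cntP Two (\<lambda>v. r + 1 \<le> v + 3 + card L \<and> v + 3 + 2 \<le> r))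
     + 3 * (cntP Two (\<lambda>v. r + 1 \<le> v + 3 \<and> v + 2 \<le> r)
                 + cntP Two (\<lambda>v. r + 1 \<le> v + card L + 3 \<and> v + card L + 2 \<le> r))"
proof -
  have fT: "finite Two" using fin_O by (simp add: Two_def)
  have ThT: "Th \<notin> Two" "L \<notin> Two" by (auto simp: Two_def)
  have O1: "Os = insert L (insert Th Two)" using L Th by (auto simp: Two_def)
  have O2: "Os - {L} = insert Th Two" using L Th LT by (auto simp: Two_def)
  have O3: "Os - {Th} = insert L Two" using L Th LT by (auto simp: Two_def)
  have fTh: "finite (insert Th Two)" using fT by simp
  have LTh: "L \<notin> insert Th Two" using LT ThT by simp
  have "card PA = cntP (insert L (insert Th Two)) (\<lambda>v. r \<le> v + 1 \<and> v \<le> r)" using card_PA O1 by simp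
  also have "\<dots> = cntP Two (\<lambda>v. r \<le> v + 1 \<and> v \<le> r)
     + cntP Two (\<lambda>v. r \<le> v + 3 + 1 \<and> v + 3 \<le> r)
     + (cntP Two (\<lambda>v. r \<le> v + card L + 1 \<and> v + card L \<le> r)
     + cntP Two (\<lambda>v. r \<le> v + 3 + card L + 1 \<and> v + 3 + card L \<le> r))"
    by (simp add: cnt_insert[OF fTh LTh] cnt_insert[OF fT ThT(1)] c3 add.assoc)
  finally have a: "card PA = \<dots>" .
  have "(\<Sum>C\<in>Os. card C * card (Tset' C)) = card L * card (Tset' L) + (card Th * card (Tset' Th) + (\<Sum>C\<in>Two. card C * card (Tset' C)))"
    using O1 fT ThT LTh by simp
  also have "(\<Sum>C\<in>Two. card C * card (Tset' C)) = 0" using sum_rest0 two by (simp add: Two_def)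
  also have "card (Tset' L) = cntP Two (\<lambda>v. r + 1 \<le> v + card L \<and> v + 2 \<le> r)
                 + cntP Two (\<lambda>v. r + 1 \<le> v + 3 + card L \<and> v + 3 + 2 \<le> r)"
    unfolding card_Tset' O2 by (simp add: cnt_insert[OF fT ThT(1)] c3 add.assoc)
  also have "card (Tset' Th) = cntP Two (\<lambda>v. r + 1 \<le> v + 3 \<and> v + 2 \<le> r)
                 + cntP Two (\<lambda>v. r + 1 \<le> v + card L + 3 \<and> v + card L + 2 \<le> r)"
    unfolding card_Tset' O3 by (simp add: cnt_insert[OF fT ThT(2)] c3 add.assoc)
  finally have b: "(\<Sum>C\<in>Os. card C * card (Tset' C)) = card L *
   (cntP Two (\<lambda>v. r + 1 \<le> v + card L \<and> v + 2 \<le> r) +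
    cntP Two (\<lambda>v. r + 1 \<le> v + 3 + card L \<and> v + 3 + 2 \<le> r)) +
   (card Th *
    (cntP Two (\<lambda>v. r + 1 \<le> v + 3 \<and> v + 2 \<le> r) +
     cntP Two (\<lambda>v. r + 1 \<le> v + card L + 3 \<and> v + card L + 2 \<le> r)) + 0)" .
  show ?thesis using card_X a b c3 by simp
qed

end


lemma conv_O0:
  assumes F: "finite Two" and two: "\<And>C. C \<in> Two \<Longrightarrow> card C = 2" and q: "card Two = 2*t - s"
    and s: "2 \<le> s" "s \<le> 2*t" and cL: "cL = 2*s - 1" and r: "r = 2*t"
  shows "int (cntP Two (\<lambda>v. r \<le> v + 1 \<and> v \<le> r) + cntP Two (\<lambda>v. r \<le> v + cL + 1 \<and> v + cL \<le> r)
           + cL * cntP Two (\<lambda>v. r + 1 \<le> v + cL \<and> v + 2 \<le> r)) = fO0 t s"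
proof -
  have two2: "\<forall>C\<in>Two. card C = 2" using two by blast
  have iq: "int (card Two) = 2 * int t - int s" using q s by simp
  have e1: "int (cntP Two (\<lambda>v. r \<le> v + 1 \<and> v \<le> r)) = W (card Two) (int t) (int t)"
  proof -
    have "\<forall>j. (\<lambda>v. r \<le> v + 1 \<and> v \<le> r) (2*j) \<longleftrightarrow> ((int t) \<le> int j \<and> int j \<le> (int t))" using r by simp presburger
    then show ?thesis by (rule cnt_W[OF F two2])
  qed
  have e2: "int (cntP Two (\<lambda>v. r \<le> v + cL + 1 \<and> v + cL \<le> r)) = W (card Two) (int t - int s) (int t - int s)"
  proof -
    have "\<forall>j. (\<lambda>v. r \<le> v + cL + 1 \<and> v + cL \<le> r) (2*j) \<longleftrightarrow> ((int t - int s) \<le> int j \<and> int j \<le> (int t - int s))" using r cL s by simp presburger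
    then show ?thesis by (rule cnt_W[OF F two2])
  qed
  have e3: "int (cntP Two (\<lambda>v. r + 1 \<le> v + cL \<and> v + 2 \<le> r)) = W (card Two) (int t - int s + 1) (int t - 1)"
  proof -
    have "\<forall>j. (\<lambda>v. r + 1 \<le> v + cL \<and> v + 2 \<le> r) (2*j) \<longleftrightarrow> ((int t - int s + 1) \<le> int j \<and> int j \<le> (int t - 1))" using r cL s by simp presburger
    then show ?thesis by (rule cnt_W[OF F two2])
  qed
  have m: "Cz (card Two) (int t - int s) = Cz (card Two) (int t)"
    using Cz_mirror[of "card Two" "int t - int s"] iq by simp
  have icL: "int cL = 2 * int s - 1" using cL s by simp
  show ?thesis unfolding fO0_def using e1 e2 e3 m icL q by (simp add: W_single)
qed

lemma conv_O1:
  assumes F: "finite Two" and two: "\<And>C. C \<in> Two \<Longrightarrow> card C = 2" and q: "card Two = 2*t + 1 - s"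
    and s: "2 \<le> s" "s \<le> 2*t + 1" and cL: "cL = 2*s - 1" and r: "r = 2*t + 1"
  shows "int (cntP Two (\<lambda>v. r \<le> v + 1 \<and> v \<le> r) + cntP Two (\<lambda>v. r \<le> v + cL + 1 \<and> v + cL \<le> r)
           + cL * cntP Two (\<lambda>v. r + 1 \<le> v + cL \<and> v + 2 \<le> r)) = fO1 t s"
proof -
  have two2: "\<forall>C\<in>Two. card C = 2" using two by blast
  have iq: "int (card Two) = 2 * int t + 1 - int s" using q s by simp
  have e1: "int (cntP Two (\<lambda>v. r \<le> v + 1 \<and> v \<le> r)) = W (card Two) (int t) (int t)"
  proof -
    have "\<forall>j. (\<lambda>v. r \<le> v + 1 \<and> v \<le> r) (2*j) \<longleftrightarrow> ((int t) \<le> int j \<and> int j \<le> (int t))" using r by simp presburger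
    then show ?thesis by (rule cnt_W[OF F two2])
  qed
  have e2: "int (cntP Two (\<lambda>v. r \<le> v + cL + 1 \<and> v + cL \<le> r)) = W (card Two) (int t + 1 - int s) (int t + 1 - int s)"
  proof -
    have "\<forall>j. (\<lambda>v. r \<le> v + cL + 1 \<and> v + cL \<le> r) (2*j) \<longleftrightarrow> ((int t + 1 - int s) \<le> int j \<and> int j \<le> (int t + 1 - int s))" using r cL s by simp presburger
    then show ?thesis by (rule cnt_W[OF F two2])
  qed
  have e3: "int (cntP Two (\<lambda>v. r + 1 \<le> v + cL \<and> v + 2 \<le> r)) = W (card Two) (int t - int s + 2) (int t - 1)"
  proof -
    have "\<forall>j. (\<lambda>v. r + 1 \<le> v + cL \<and> v + 2 \<le> r) (2*j) \<longleftrightarrow> ((int t - int s + 2) \<le> int j \<and> int j \<le> (int t - 1))" using r cL s by simp presburger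
    then show ?thesis by (rule cnt_W[OF F two2])
  qed
  have m: "Cz (card Two) (int t + 1 - int s) = Cz (card Two) (int t)"
    using Cz_mirror[of "card Two" "int t + 1 - int s"] iq by simp
  have icL: "int cL = 2 * int s - 1" using cL s by simp
  show ?thesis unfolding fO1_def using e1 e2 e3 m icL q by (simp add: W_single)
qed

lemma conv_E0:
  assumes F: "finite Two" and two: "\<And>C. C \<in> Two \<Longrightarrow> card C = 2" and q: "card Two = 2*t - s - 2"
    and s: "2 \<le> s" "s + 2 \<le> 2*t" and cL: "cL = 2*s" and r: "r = 2*t"
  shows "int (cntP Two (\<lambda>v. r \<le> v + 1 \<and> v \<le> r)
     + cntP Two (\<lambda>v. r \<le> v + 3 + 1 \<and> v + 3 \<le> r)
     + cntP Two (\<lambda>v. r \<le> v + cL + 1 \<and> v + cL \<le> r)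
     + cntP Two (\<lambda>v. r \<le> v + 3 + cL + 1 \<and> v + 3 + cL \<le> r)
     + cL * (cntP Two (\<lambda>v. r + 1 \<le> v + cL \<and> v + 2 \<le> r)
                 + cntP Two (\<lambda>v. r + 1 \<le> v + 3 + cL \<and> v + 3 + 2 \<le> r))
     + 3 * (cntP Two (\<lambda>v. r + 1 \<le> v + 3 \<and> v + 2 \<le> r)
                 + cntP Two (\<lambda>v. r + 1 \<le> v + cL + 3 \<and> v + cL + 2 \<le> r))) = fE0 t s"
proof -
  have two2: "\<forall>C\<in>Two. card C = 2" using two by blast
  define Q where "Q = card Two"
  have iq: "int Q = 2 * int t - int s - 2" using q s by (simp add: Q_def)
  have e1: "int (cntP Two (\<lambda>v. r \<le> v + 1 \<and> v \<le> r)) = W Q (int t) (int t)"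
  proof -
    have "\<forall>j. (\<lambda>v. r \<le> v + 1 \<and> v \<le> r) (2*j) \<longleftrightarrow> ((int t) \<le> int j \<and> int j \<le> (int t))" using r by simp presburger
    then show ?thesis unfolding Q_def by (rule cnt_W[OF F two2])
  qed
  have e2: "int (cntP Two (\<lambda>v. r \<le> v + 3 + 1 \<and> v + 3 \<le> r)) = W Q (int t - 2) (int t - 2)"
  proof -
    have "\<forall>j. (\<lambda>v. r \<le> v + 3 + 1 \<and> v + 3 \<le> r) (2*j) \<longleftrightarrow> ((int t - 2) \<le> int j \<and> int j \<le> (int t - 2))" using r by simp presburger
    then show ?thesis unfolding Q_def by (rule cnt_W[OF F two2])
  qed
  have e3: "int (cntP Two (\<lambda>v. r \<le> v + cL + 1 \<and> v + cL \<le> r)) = W Q (int t - int s) (int t - int s)"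
  proof -
    have "\<forall>j. (\<lambda>v. r \<le> v + cL + 1 \<and> v + cL \<le> r) (2*j) \<longleftrightarrow> ((int t - int s) \<le> int j \<and> int j \<le> (int t - int s))" using r cL s by simp presburger
    then show ?thesis unfolding Q_def by (rule cnt_W[OF F two2])
  qed
  have e4: "int (cntP Two (\<lambda>v. r \<le> v + 3 + cL + 1 \<and> v + 3 + cL \<le> r)) = W Q (int t - int s - 2) (int t - int s - 2)"
  proof -
    have "\<forall>j. (\<lambda>v. r \<le> v + 3 + cL + 1 \<and> v + 3 + cL \<le> r) (2*j) \<longleftrightarrow> ((int t - int s - 2) \<le> int j \<and> int j \<le> (int t - int s - 2))" using r cL s by simp presburger
    then show ?thesis unfolding Q_def by (rule cnt_W[OF F two2])
  qed
  have e5: "int (cntP Two (\<lambda>v. r + 1 \<le> v + cL \<and> v + 2 \<le> r)) = W Q (int t - int s + 1) (int t - 1)"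
  proof -
    have "\<forall>j. (\<lambda>v. r + 1 \<le> v + cL \<and> v + 2 \<le> r) (2*j) \<longleftrightarrow> ((int t - int s + 1) \<le> int j \<and> int j \<le> (int t - 1))" using r cL s by simp presburger
    then show ?thesis unfolding Q_def by (rule cnt_W[OF F two2])
  qed
  have e6: "int (cntP Two (\<lambda>v. r + 1 \<le> v + 3 + cL \<and> v + 3 + 2 \<le> r)) = W Q (int t - int s - 1) (int t - 3)"
  proof -
    have "\<forall>j. (\<lambda>v. r + 1 \<le> v + 3 + cL \<and> v + 3 + 2 \<le> r) (2*j) \<longleftrightarrow> ((int t - int s - 1) \<le> int j \<and> int j \<le> (int t - 3))" using r cL s by simp presburger
    then show ?thesis unfolding Q_def by (rule cnt_W[OF F two2])
  qed
  have e7: "int (cntP Two (\<lambda>v. r + 1 \<le> v + 3 \<and> v + 2 \<le> r)) = W Q (int t - 1) (int t - 1)"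
  proof -
    have "\<forall>j. (\<lambda>v. r + 1 \<le> v + 3 \<and> v + 2 \<le> r) (2*j) \<longleftrightarrow> ((int t - 1) \<le> int j \<and> int j \<le> (int t - 1))" using r by simp presburger
    then show ?thesis unfolding Q_def by (rule cnt_W[OF F two2])
  qed
  have e8: "int (cntP Two (\<lambda>v. r + 1 \<le> v + cL + 3 \<and> v + cL + 2 \<le> r)) = W Q (int t - int s - 1) (int t - int s - 1)"
  proof -
    have "\<forall>j. (\<lambda>v. r + 1 \<le> v + cL + 3 \<and> v + cL + 2 \<le> r) (2*j) \<longleftrightarrow> ((int t - int s - 1) \<le> int j \<and> int j \<le> (int t - int s - 1))" using r cL s by simp presburger
    then show ?thesis unfolding Q_def by (rule cnt_W[OF F two2])
  qed
  have m1: "Cz Q (int t - int s) = Cz Q (int t - 2)"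
    using Cz_mirror[of Q "int t - int s"] iq by simp
  have m2: "Cz Q (int t - int s - 2) = Cz Q (int t)"
    using Cz_mirror[of Q "int t - int s - 2"] iq by simp
  have m3: "Cz Q (int t - int s - 1) = Cz Q (int t - 1)"
    using Cz_mirror[of Q "int t - int s - 1"] iq by simp
  have icL: "int cL = 2 * int s" using cL by simp
  have qq: "2*t - s - 2 = Q" using q by (simp add: Q_def)
  show ?thesis unfolding fE0_def qq using e1 e2 e3 e4 e5 e6 e7 e8 m1 m2 m3 icL
    by (simp add: W_single algebra_simps)
qed

lemma conv_E1:
  assumes F: "finite Two" and two: "\<And>C. C \<in> Two \<Longrightarrow> card C = 2" and q: "card Two = 2*t + 1 - s - 2"
    and s: "2 \<le> s" "s + 2 \<le> 2*t + 1" and cL: "cL = 2*s" and r: "r = 2*t + 1"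
  shows "int (cntP Two (\<lambda>v. r \<le> v + 1 \<and> v \<le> r)
     + cntP Two (\<lambda>v. r \<le> v + 3 + 1 \<and> v + 3 \<le> r)
     + cntP Two (\<lambda>v. r \<le> v + cL + 1 \<and> v + cL \<le> r)
     + cntP Two (\<lambda>v. r \<le> v + 3 + cL + 1 \<and> v + 3 + cL \<le> r)
     + cL * (cntP Two (\<lambda>v. r + 1 \<le> v + cL \<and> v + 2 \<le> r)
                 + cntP Two (\<lambda>v. r + 1 \<le> v + 3 + cL \<and> v + 3 + 2 \<le> r))
     + 3 * (cntP Two (\<lambda>v. r + 1 \<le> v + 3 \<and> v + 2 \<le> r)
                 + cntP Two (\<lambda>v. r + 1 \<le> v + cL + 3 \<and> v + cL + 2 \<le> r))) = fE1 t s"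
proof -
  have two2: "\<forall>C\<in>Two. card C = 2" using two by blast
  define Q where "Q = card Two"
  have iq: "int Q = 2 * int t - int s - 1" using q s by (simp add: Q_def)
  have e1: "int (cntP Two (\<lambda>v. r \<le> v + 1 \<and> v \<le> r)) = W Q (int t) (int t)"
  proof -
    have "\<forall>j. (\<lambda>v. r \<le> v + 1 \<and> v \<le> r) (2*j) \<longleftrightarrow> ((int t) \<le> int j \<and> int j \<le> (int t))" using r by simp presburger
    then show ?thesis unfolding Q_def by (rule cnt_W[OF F two2])
  qed
  have e2: "int (cntP Two (\<lambda>v. r \<le> v + 3 + 1 \<and> v + 3 \<le> r)) = W Q (int t - 1) (int t - 1)"
  proof -
    have "\<forall>j. (\<lambda>v. r \<le> v + 3 + 1 \<and> v + 3 \<le> r) (2*j) \<longleftrightarrow> ((int t - 1) \<le> int j \<and> int j \<le> (int t - 1))" using r by simp presburger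
    then show ?thesis unfolding Q_def by (rule cnt_W[OF F two2])
  qed
  have e3: "int (cntP Two (\<lambda>v. r \<le> v + cL + 1 \<and> v + cL \<le> r)) = W Q (int t - int s) (int t - int s)"
  proof -
    have "\<forall>j. (\<lambda>v. r \<le> v + cL + 1 \<and> v + cL \<le> r) (2*j) \<longleftrightarrow> ((int t - int s) \<le> int j \<and> int j \<le> (int t - int s))" using r cL s by simp presburger
    then show ?thesis unfolding Q_def by (rule cnt_W[OF F two2])
  qed
  have e4: "int (cntP Two (\<lambda>v. r \<le> v + 3 + cL + 1 \<and> v + 3 + cL \<le> r)) = W Q (int t - int s - 1) (int t - int s - 1)"
  proof -
    have "\<forall>j. (\<lambda>v. r \<le> v + 3 + cL + 1 \<and> v + 3 + cL \<le> r) (2*j) \<longleftrightarrow> ((int t - int s - 1) \<le> int j \<and> int j \<le> (int t - int s - 1))" using r cL s by simp presburger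
    then show ?thesis unfolding Q_def by (rule cnt_W[OF F two2])
  qed
  have e5: "int (cntP Two (\<lambda>v. r + 1 \<le> v + cL \<and> v + 2 \<le> r)) = W Q (int t - int s + 1) (int t - 1)"
  proof -
    have "\<forall>j. (\<lambda>v. r + 1 \<le> v + cL \<and> v + 2 \<le> r) (2*j) \<longleftrightarrow> ((int t - int s + 1) \<le> int j \<and> int j \<le> (int t - 1))" using r cL s by simp presburger
    then show ?thesis unfolding Q_def by (rule cnt_W[OF F two2])
  qed
  have e6: "int (cntP Two (\<lambda>v. r + 1 \<le> v + 3 + cL \<and> v + 3 + 2 \<le> r)) = W Q (int t - int s) (int t - 2)"
  proof -
    have "\<forall>j. (\<lambda>v. r + 1 \<le> v + 3 + cL \<and> v + 3 + 2 \<le> r) (2*j) \<longleftrightarrow> ((int t - int s) \<le> int j \<and> int j \<le> (int t - 2))" using r cL s by simp presburger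
    then show ?thesis unfolding Q_def by (rule cnt_W[OF F two2])
  qed
  have e7: "int (cntP Two (\<lambda>v. r + 1 \<le> v + 3 \<and> v + 2 \<le> r)) = W Q 1 0"
  proof -
    have "\<forall>j. (\<lambda>v. r + 1 \<le> v + 3 \<and> v + 2 \<le> r) (2*j) \<longleftrightarrow> (1 \<le> int j \<and> int j \<le> 0)" using r by simp presburger
    then show ?thesis unfolding Q_def by (rule cnt_W[OF F two2])
  qed
  have e8: "int (cntP Two (\<lambda>v. r + 1 \<le> v + cL + 3 \<and> v + cL + 2 \<le> r)) = W Q 1 0"
  proof -
    have "\<forall>j. (\<lambda>v. r + 1 \<le> v + cL + 3 \<and> v + cL + 2 \<le> r) (2*j) \<longleftrightarrow> (1 \<le> int j \<and> int j \<le> 0)" using r cL s by simp presburger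
    then show ?thesis unfolding Q_def by (rule cnt_W[OF F two2])
  qed
  have m1: "Cz Q (int t - int s) = Cz Q (int t - 1)"
    using Cz_mirror[of Q "int t - int s"] iq by simp
  have m2: "Cz Q (int t - int s - 1) = Cz Q (int t)"
    using Cz_mirror[of Q "int t - int s - 1"] iq by simp
  have icL: "int cL = 2 * int s" using cL by simp
  have qq: "2*t - s - 1 = Q" using q by (simp add: Q_def)
  show ?thesis unfolding fE1_def qq using e1 e2 e3 e4 e5 e6 e7 e8 m1 m2 icL
    by (simp add: W_single W_empty algebra_simps)
qed


lemma ssum_twos: "finite F \<Longrightarrow> \<forall>C\<in>F. card C = 2 \<Longrightarrow> (\<Sum>C\<in>F. card C) = 2 * card F"
proof -
  assume "\<forall>C\<in>F. card C = 2"
  then have "(\<Sum>C\<in>F. card C) = (\<Sum>C\<in>F. 2)" by (intro sum.cong) auto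
  then show ?thesis by simp
qed

lemma (in pctx) ct_Os: "cycle_type p = image_mset card (mset_set Os)"
  unfolding cycle_type_def Os_def by simp

lemma odd_case:
  assumes p: "p \<in> Sym n" and ct: "cycle_type p = I_type r (2*s - 1)" and s: "2 \<le> s" "s \<le> r"
  shows "\<exists>Two. finite Two \<and> (\<forall>C\<in>Two. card C = 2) \<and> card Two = r - s \<and>
    card (ball_r n r p \<inter> ball_r n r id) = cntP Two (\<lambda>v. r \<le> v + 1 \<and> v \<le> r)
     + cntP Two (\<lambda>v. r \<le> v + (2*s - 1) + 1 \<and> v + (2*s - 1) \<le> r)
     + (2*s - 1) * cntP Two (\<lambda>v. r + 1 \<le> v + (2*s - 1) \<and> v + 2 \<le> r)"
proof -
  interpret pctx p n using p by (simp add: pctx_def Sym_def)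
  have it: "I_type r (2*s - 1) = add_mset (2*s - 1) (replicate_mset (r - s) 2)"
  proof -
    have "odd (2*s - 1)" using s by simp
    moreover have "(2*s - 1 + 1) div 2 = s" using s by simp
    ultimately show ?thesis unfolding I_type_def by simp
  qed
  obtain L where L: "L \<in> Os" "card L = 2*s - 1" "image_mset card (mset_set (Os - {L})) = replicate_mset (r - s) 2"
    using decode1[OF fin_O, of "2*s - 1" "replicate_mset (r - s) 2"] ct it ct_Os by auto
  have fR: "finite (Os - {L})" using fin_O by simp
  have two: "\<forall>C\<in>Os - {L}. card C = 2" and cR: "card (Os - {L}) = r - s"
    using decode2[OF fR L(3)] by auto
  have "card S = ssum Os" using sum_O by simp
  also have "\<dots> = card L + (\<Sum>C\<in>Os - {L}. card C)" unfolding ssum_def using sum.remove[OF fin_O L(1)] .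
  also have "\<dots> = (2*s - 1) + 2 * (r - s)" using ssum_twos[OF fR two] cR L(2) by simp
  finally have "card S + 1 = 2 * r" using s by simp
  then interpret pctx2 p n r by (simp add: pctx2_def pctx2_axioms_def pctx_axioms)
  have "card X = cntP (Os - {L}) (\<lambda>v. r \<le> v + 1 \<and> v \<le> r)
     + cntP (Os - {L}) (\<lambda>v. r \<le> v + card L + 1 \<and> v + card L \<le> r)
     + card L * cntP (Os - {L}) (\<lambda>v. r + 1 \<le> v + card L \<and> v + 2 \<le> r)"
    by (rule eval_odd_X[OF L(1) two])
  then show ?thesis using fR two cR L(2) unfolding X_def by (intro exI[of _ "Os - {L}"]) simp
qed

lemma even_case:
  assumes p: "p \<in> Sym n" and ct: "cycle_type p = I_type r (2*s)" and s: "2 \<le> s" "s + 2 \<le> r"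
  shows "\<exists>Two. finite Two \<and> (\<forall>C\<in>Two. card C = 2) \<and> card Two = r - s - 2 \<and>
    card (ball_r n r p \<inter> ball_r n r id) = cntP Two (\<lambda>v. r \<le> v + 1 \<and> v \<le> r)
     + cntP Two (\<lambda>v. r \<le> v + 3 + 1 \<and> v + 3 \<le> r)
     + cntP Two (\<lambda>v. r \<le> v + 2*s + 1 \<and> v + 2*s \<le> r)
     + cntP Two (\<lambda>v. r \<le> v + 3 + 2*s + 1 \<and> v + 3 + 2*s \<le> r)
     + 2*s * (cntP Two (\<lambda>v. r + 1 \<le> v + 2*s \<and> v + 2 \<le> r)
                 + cntP Two (\<lambda>v. r + 1 \<le> v + 3 + 2*s \<and> v + 3 + 2 \<le> r))
     + 3 * (cntP Two (\<lambda>v. r + 1 \<le> v + 3 \<and> v + 2 \<le> r)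
                 + cntP Two (\<lambda>v. r + 1 \<le> v + 2*s + 3 \<and> v + 2*s + 2 \<le> r))"
proof -
  interpret pctx p n using p by (simp add: pctx_def Sym_def)
  have it: "I_type r (2*s) = add_mset (2*s) (add_mset 3 (replicate_mset (r - s - 2) 2))"
    unfolding I_type_def by simp
  obtain L where L: "L \<in> Os" "card L = 2*s" "image_mset card (mset_set (Os - {L})) = add_mset 3 (replicate_mset (r - s - 2) 2)"
    using decode1[OF fin_O, of "2*s" "add_mset 3 (replicate_mset (r - s - 2) 2)"] ct it ct_Os by auto
  have fR: "finite (Os - {L})" using fin_O by simp
  obtain Th where Th: "Th \<in> Os - {L}" "card Th = 3" "image_mset card (mset_set (Os - {L} - {Th})) = replicate_mset (r - s - 2) 2"
    using decode1[OF fR L(3)] by auto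
  have eqT: "Os - {L} - {Th} = Os - {L, Th}" by blast
  have fT: "finite (Os - {L, Th})" using fin_O by simp
  have two: "\<forall>C\<in>Os - {L, Th}. card C = 2" and cT: "card (Os - {L, Th}) = r - s - 2"
    using decode2[OF fT] Th(3) eqT by auto
  have ThO: "Th \<in> Os" "L \<noteq> Th" using Th(1) by auto
  have "card S = ssum Os" using sum_O by simp
  also have "\<dots> = card L + (\<Sum>C\<in>Os - {L}. card C)" unfolding ssum_def using sum.remove[OF fin_O L(1)] .
  also have "(\<Sum>C\<in>Os - {L}. card C) = card Th + (\<Sum>C\<in>Os - {L} - {Th}. card C)" using sum.remove[OF fR Th(1)] .
  also have "(\<Sum>C\<in>Os - {L} - {Th}. card C) = 2 * (r - s - 2)" using ssum_twos[OF fT two] cT eqT by simp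
  finally have "card S + 1 = 2 * r" using s L(2) Th(2) by simp
  then interpret pctx2 p n r by (simp add: pctx2_def pctx2_axioms_def pctx_axioms)
  note E = eval_even_X[OF L(1) ThO(1) ThO(2) Th(2) two]
  from E show ?thesis using fT two cT L(2) unfolding X_def by (intro exI[of _ "Os - {L, Th}"]) simp
qed


lemma Sym_crit0:
  assumes "\<And>i. i \<notin> {1..n} \<Longrightarrow> \<sigma> i = i" "\<And>i. i \<in> {1..n} \<Longrightarrow> \<sigma> i \<in> {1..n}" "inj_on \<sigma> {1..n}"
  shows "\<sigma> \<in> Sym n"
proof -
  have "\<sigma> ` {1..n} \<subseteq> {1..n}" using assms(2) by blast
  then have "\<sigma> ` {1..n} = {1..n}" using endo_inj_surj[OF finite_atLeastAtMost _ assms(3)] by blast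
  then have "bij_betw \<sigma> {1..n} {1..n}" using assms(3) by (simp add: bij_betw_def)
  then have "\<sigma> permutes {1..n}" using assms(1) by (rule bij_imp_permutes)
  then show ?thesis by (simp add: Sym_def)
qed

definition cyc :: "nat \<Rightarrow> nat \<Rightarrow> nat \<Rightarrow> nat" where
  "cyc l N i = (if 1 \<le> i \<and> i < l then i + 1 else if i = l then 1
               else if l < i \<and> i \<le> N then (if even i then i + 1 else i - 1) else i)"

lemma construct:
  assumes s: "2 \<le> s" "s \<le> r" and nN: "2*r - 1 \<le> n"
  shows "\<exists>\<pi>\<in>Sym n. cycle_type \<pi> = I_type r (2*s - 1)"
proof -
  define l where "l = 2*s - 1"
  define N where "N = 2*r - 1"
  define c where "c = cyc l N"
  have l3: "3 \<le> l" and lN: "l \<le> N" and oddl: "odd l" and oddN: "odd N"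
    using s by (auto simp: l_def N_def)
  have c_in: "c i = i + 1" if "1 \<le> i" "i < l" for i using that by (simp add: c_def cyc_def)
  have c_l: "c l = 1" using l3 by (simp add: c_def cyc_def)
  have c_ev: "c i = i + 1" if "l < i" "i \<le> N" "even i" for i using that by (simp add: c_def cyc_def)
  have c_od: "c i = i - 1" if "l < i" "i \<le> N" "odd i" for i using that by (simp add: c_def cyc_def)
  have c_out: "c i = i" if "i = 0 \<or> N < i" for i using that l3 lN by (auto simp: c_def cyc_def)
  have c_ev2: "i + 1 \<le> N" if "l < i" "i \<le> N" "even i" for i
  proof -
    have "i \<noteq> N" using that oddN by auto
    then show ?thesis using that by simp
  qed
  have c_od2: "l < i - 1" if "l < i" "i \<le> N" "odd i" for i
  proof -
    have "i \<noteq> l + 1" using that oddl by auto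
    then show ?thesis using that by simp
  qed
  have cS: "c \<in> Sym n"
  proof (rule Sym_crit0)
    fix i assume "i \<notin> {1..n}"
    then have "i = 0 \<or> N < i" using nN unfolding N_def by auto
    then show "c i = i" by (rule c_out)
  next
    fix i assume i: "i \<in> {1..n}"
    show "c i \<in> {1..n}"
    proof -
      have i1: "1 \<le> i" "i \<le> n" using i by auto
      consider "i < l" | "i = l" | "l < i" "i \<le> N" "even i" | "l < i" "i \<le> N" "odd i" | "N < i"
        by (metis linorder_neqE_nat not_le)
      then show ?thesis
      proof cases
        case 1 then have "c i = i + 1" "i + 1 \<le> N" using c_in[OF i1(1)] lN by auto
        then show ?thesis using nN unfolding N_def by simp
      next
        case 2 then show ?thesis using c_l i1 by simp
      next
        case 3 then show ?thesis using c_ev[OF 3] c_ev2[OF 3] nN unfolding N_def by simp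
      next
        case 4 then show ?thesis using c_od[OF 4] c_od2[OF 4] i by simp
      next
        case 5 then show ?thesis using c_out[of i] i by simp
      qed
    qed
  next
    show "inj_on c {1..n}"
    proof (rule inj_on_inverseI)
      fix i assume i: "i \<in> {1..n}"
      define c' where "c' = (\<lambda>i. if 1 < i \<and> i \<le> l then i - 1 else if i = 1 then l
           else if l < i \<and> i \<le> N then (if even i then i + 1 else i - 1) else i)"
      have i1: "1 \<le> i" using i by auto
      consider "i < l" | "i = l" | "l < i" "i \<le> N" "even i" | "l < i" "i \<le> N" "odd i" | "N < i"
        by (metis linorder_neqE_nat not_le)
      then show "c' (c i) = i"
      proof cases
        case 1 then show ?thesis using c_in[OF i1 1] i1 by (simp add: c'_def)
      next
        case 2 then show ?thesis using c_l by (simp add: c'_def)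
      next
        case 3 then show ?thesis using c_ev[OF 3] c_ev2[OF 3] by (simp add: c'_def)
      next
        case 4 then show ?thesis using c_od[OF 4] c_od2[OF 4] l3 by (simp add: c'_def)
      next
        case 5 then show ?thesis using c_out[of i] lN l3 by (simp add: c'_def)
      qed
    qed
  qed
  interpret pctx c n using cS by (simp add: pctx_def Sym_def)
  have Sset: "S = {1..N}"
  proof -
    have "c i \<noteq> i \<longleftrightarrow> i \<in> {1..N}" for i
    proof (cases "i = 0")
      case True then show ?thesis using c_out[of i] by simp
    next
      case False
      then have i1: "1 \<le> i" by simp
      consider "i < l" | "i = l" | "l < i" "i \<le> N" "even i" | "l < i" "i \<le> N" "odd i" | "N < i"
        by (metis linorder_neqE_nat not_le)
      then show ?thesis
      proof cases
        case 1 then show ?thesis using c_in[OF i1 1] i1 lN by simp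
      next
        case 2 then show ?thesis using c_l l3 lN by simp
      next
        case 3 then show ?thesis using c_ev[OF 3] 3 l3 by simp
      next
        case 4 then show ?thesis using c_od[OF 4] c_od2[OF 4] 4 l3 by simp
      next
        case 5 then show ?thesis using c_out[of i] by simp
      qed
    qed
    then show ?thesis unfolding S_def by blast
  qed
  define A where "A = {1..l}"
  have pow1: "(c ^^ m) 1 = m + 1" if "m < l" for m
    using that
  proof (induction m)
    case 0 then show ?case by simp
  next
    case (Suc m)
    then have "(c ^^ m) 1 = m + 1" by simp
    then show ?case using c_in[of "m + 1"] Suc.prems by simp
  qed
  have powl: "(c ^^ l) 1 = 1"
  proof -
    have "l = Suc (l - 1)" using l3 by simp
    then have "(c ^^ l) 1 = c ((c ^^ (l - 1)) 1)" by (metis funpow.simps(2) o_apply)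
    also have "(c ^^ (l - 1)) 1 = l" using pow1[of "l - 1"] l3 by simp
    finally show ?thesis using c_l by simp
  qed
  have orb1: "orbit c 1 = A"
  proof -
    have "orbit c 1 = {(c ^^ m) 1 | m. m < l}" by (rule orbit_altdef_bounded[OF powl]) (use l3 in simp)
    also have "\<dots> = {m + 1 | m. m < l}"
    proof (intro set_eqI iffI)
      fix x assume "x \<in> {(c ^^ m) 1 | m. m < l}" then show "x \<in> {m + 1 | m. m < l}" using pow1 by auto
    next
      fix x assume "x \<in> {m + 1 | m. m < l}"
      then obtain m where "m < l" "x = m + 1" by blast
      then show "x \<in> {(c ^^ m) 1 | m. m < l}" using pow1[of m] by (intro CollectI exI[of _ m]) simp
    qed
    also have "\<dots> = A" unfolding A_def
    proof (intro set_eqI iffI)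
      fix x assume "x \<in> {1..l}" then show "x \<in> {m + 1 | m. m < l}" by (intro CollectI exI[of _ "x - 1"]) auto
    qed auto
    finally show ?thesis .
  qed
  have AO: "A \<in> Os"
  proof -
    have "1 \<in> S" using Sset lN l3 by simp
    then show ?thesis using O_in orb1 by metis
  qed
  have two: "\<forall>C\<in>Os - {A}. card C = 2"
  proof
    fix C assume C: "C \<in> Os - {A}"
    then obtain x where x: "x \<in> S" "C = orbit c x" unfolding O_alt by blast
    have xl: "l < x"
    proof (rule ccontr)
      assume "\<not> l < x"
      then have "x \<in> A" using x Sset by (auto simp: A_def)
      then have "orbit c x = A" using orb_eq orb1 by metis
      then show False using C x by simp
    qed
    have xN: "x \<le> N" using x Sset by simp
    have cc: "c (c x) = x"
    proof (cases "even x")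
      case True
      then have "c x = x + 1" "x + 1 \<le> N" using c_ev c_ev2 xl xN by auto
      moreover have "odd (x + 1)" using True by simp
      ultimately show ?thesis using c_od[of "x + 1"] xl by simp
    next
      case False
      then have "c x = x - 1" "l < x - 1" using c_od c_od2 xl xN by auto
      moreover have "even (x - 1)" using False xl by simp
      ultimately show ?thesis using c_ev[of "x - 1"] xl xN by simp
    qed
    have "(c ^^ 2) x = x" using cc by (simp add: numeral_2_eq_2)
    then have "orbit c x = {(c ^^ m) x | m. m < 2}" by (rule orbit_altdef_bounded) simp
    also have "\<dots> = {x, c x}"
    proof (intro set_eqI iffI)
      fix z assume "z \<in> {(c ^^ m) x | m. m < 2}" then show "z \<in> {x, c x}" by (auto simp: numeral_2_eq_2 less_Suc_eq)
    next
      fix z assume "z \<in> {x, c x}"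
      then have "z = (c ^^ 0) x \<or> z = (c ^^ 1) x" by auto
      then show "z \<in> {(c ^^ m) x | m. m < 2}"
      proof
        assume "z = (c ^^ 0) x" then show ?thesis by (intro CollectI exI[of _ 0]) simp
      next
        assume "z = (c ^^ 1) x" then show ?thesis by (intro CollectI exI[of _ 1]) simp
      qed
    qed
    finally have "C = {x, c x}" using x by simp
    moreover have "c x \<noteq> x" using x by (simp add: S_def)
    ultimately show "card C = 2" by simp
  qed
  have fR: "finite (Os - {A})" using fin_O by simp
  have cA: "card A = l" by (simp add: A_def)
  have "N = ssum Os" using sum_O Sset by simp
  also have "\<dots> = card A + (\<Sum>C\<in>Os - {A}. card C)" unfolding ssum_def using sum.remove[OF fin_O AO] .
  also have "\<dots> = l + 2 * card (Os - {A})" using ssum_twos[OF fR two] cA by simp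
  finally have cR: "card (Os - {A}) = r - s" using s unfolding N_def l_def by simp
  have "image_mset card (mset_set Os) = add_mset (card A) (image_mset card (mset_set (Os - {A})))"
    using mset_set.remove[OF fin_O AO] by simp
  also have "image_mset card (mset_set (Os - {A})) = image_mset (\<lambda>_. 2) (mset_set (Os - {A}))"
    by (rule image_mset_cong) (use two fR in auto)
  also have "\<dots> = replicate_mset (size (mset_set (Os - {A}))) 2" by (rule image_mset_const_eq)
  also have "\<dots> = replicate_mset (r - s) 2" using cR by simp
  finally have ct: "cycle_type c = add_mset l (replicate_mset (r - s) 2)" using ct_Os cA by simp
  have it: "I_type r (2*s - 1) = add_mset (2*s - 1) (replicate_mset (r - s) 2)"
  proof -
    have "odd (2*s - 1)" using s by simp
    moreover have "(2*s - 1 + 1) div 2 = s" using s by simp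
    ultimately show ?thesis unfolding I_type_def by simp
  qed
  show ?thesis using cS ct it by (auto simp: l_def)
qed


lemma int_le_nat: "int a \<le> int b \<Longrightarrow> a \<le> b" by simp

theorem lemma15:
  fixes t r n :: nat
  assumes "t \<ge> 2" and "r = 2*t \<or> r = 2*t + 1" and "n \<ge> 2*r - 1"
  defines "lstar \<equiv> (if r = 2*t then 5 else 7::nat)"
  shows "(\<forall>l \<pi>. admissible r l \<longrightarrow> \<pi> \<in> Sym n \<longrightarrow> cycle_type \<pi> = I_type r l \<longrightarrow>
            card (ball_r n r \<pi> \<inter> ball_r n r id)
              \<le> 2 * ((2*t - 3) choose t) + lstar * ((2*t - 2) choose (t - 1)))
       \<and> admissible r lstar
       \<and> (\<exists>\<pi> \<in> Sym n. cycle_type \<pi> = I_type r lstar \<and>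
            card (ball_r n r \<pi> \<inter> ball_r n r id)
              = 2 * ((2*t - 3) choose t) + lstar * ((2*t - 2) choose (t - 1)))"
proof -
  note t2 = assms(1) and rr = assms(2) and nn = assms(3)
  define F where "F = 2 * ((2*t - 3) choose t) + lstar * ((2*t - 2) choose (t - 1))"
  have pk0: "r = 2*t \<Longrightarrow> int F = fO0 t 3" using O0_3_val[OF t2] by (simp add: F_def lstar_def)
  have pk1: "r = 2*t + 1 \<Longrightarrow> int F = fO1 t 4" using O1_4_val[OF t2] by (simp add: F_def lstar_def)
  have odd_val: "int (card (ball_r n r \<pi> \<inter> ball_r n r id)) = (if r = 2*t then fO0 t s else fO1 t s)"
    if p: "\<pi> \<in> Sym n" and ct: "cycle_type \<pi> = I_type r (2*s - 1)" and s: "2 \<le> s" "s \<le> r" for \<pi> s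
  proof -
    obtain Two where T: "finite Two" "\<forall>C\<in>Two. card C = 2" "card Two = r - s"
      "card (ball_r n r \<pi> \<inter> ball_r n r id) = cntP Two (\<lambda>v. r \<le> v + 1 \<and> v \<le> r)
     + cntP Two (\<lambda>v. r \<le> v + (2*s - 1) + 1 \<and> v + (2*s - 1) \<le> r)
     + (2*s - 1) * cntP Two (\<lambda>v. r + 1 \<le> v + (2*s - 1) \<and> v + 2 \<le> r)"
      using odd_case[OF p ct s] by blast
    have two: "\<And>C. C \<in> Two \<Longrightarrow> card C = 2" using T(2) by blast
    show ?thesis
    proof (cases "r = 2*t")
      case True
      have "int (card (ball_r n r \<pi> \<inter> ball_r n r id)) = fO0 t s"
        unfolding T(4) by (rule conv_O0[OF T(1) two]) (use T(3) s True in auto)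
      then show ?thesis using True by simp
    next
      case False
      then have r1: "r = 2*t + 1" using rr by simp
      have "int (card (ball_r n r \<pi> \<inter> ball_r n r id)) = fO1 t s"
        unfolding T(4) by (rule conv_O1[OF T(1) two]) (use T(3) s r1 in auto)
      then show ?thesis using False by simp
    qed
  qed
  have part1: "card (ball_r n r \<pi> \<inter> ball_r n r id) \<le> F"
    if adm: "admissible r l" and p: "\<pi> \<in> Sym n" and ct: "cycle_type \<pi> = I_type r l" for l \<pi>
  proof -
    consider (o) s where "2 \<le> s" "s \<le> r" "l = 2*s - 1" | (e) s where "2 \<le> s" "s + 2 \<le> r" "l = 2*s"
      using adm unfolding admissible_def by blast
    then show ?thesis
    proof cases
      case o
      have v: "int (card (ball_r n r \<pi> \<inter> ball_r n r id)) = (if r = 2*t then fO0 t s else fO1 t s)"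
        using odd_val[OF p _ o(1,2)] ct o(3) by simp
      show ?thesis
      proof (cases "r = 2*t")
        case True
        then have "fO0 t s \<le> fO0 t 3" using O0_max[OF t2 o(1)] o(2) by simp
        then show ?thesis using v pk0[OF True] True by simp
      next
        case False
        then have r1: "r = 2*t + 1" using rr by simp
        then have "fO1 t s \<le> fO1 t 4" using O1_max[OF t2 o(1)] o(2) by simp
        then show ?thesis using v pk1[OF r1] False by simp
      qed
    next
      case e
      obtain Two where T: "finite Two" "\<forall>C\<in>Two. card C = 2" "card Two = r - s - 2"
        "card (ball_r n r \<pi> \<inter> ball_r n r id) = cntP Two (\<lambda>v. r \<le> v + 1 \<and> v \<le> r)
     + cntP Two (\<lambda>v. r \<le> v + 3 + 1 \<and> v + 3 \<le> r)
     + cntP Two (\<lambda>v. r \<le> v + 2*s + 1 \<and> v + 2*s \<le> r)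
     + cntP Two (\<lambda>v. r \<le> v + 3 + 2*s + 1 \<and> v + 3 + 2*s \<le> r)
     + 2*s * (cntP Two (\<lambda>v. r + 1 \<le> v + 2*s \<and> v + 2 \<le> r)
                 + cntP Two (\<lambda>v. r + 1 \<le> v + 3 + 2*s \<and> v + 3 + 2 \<le> r))
     + 3 * (cntP Two (\<lambda>v. r + 1 \<le> v + 3 \<and> v + 2 \<le> r)
                 + cntP Two (\<lambda>v. r + 1 \<le> v + 2*s + 3 \<and> v + 2*s + 2 \<le> r))"
        using even_case[OF p _ e(1,2)] ct e(3) by blast
      have two: "\<And>C. C \<in> Two \<Longrightarrow> card C = 2" using T(2) by blast
      show ?thesis
      proof (cases "r = 2*t")
        case True
        have v: "int (card (ball_r n r \<pi> \<inter> ball_r n r id)) = fE0 t s"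
          unfolding T(4) by (rule conv_E0[OF T(1) two]) (use T(3) e True in auto)
        have "fE0 t s \<le> fO0 t (s + 1)" using E0_le[of s t] e True by simp
        also have "\<dots> \<le> fO0 t 3" using O0_max[OF t2, of "s + 1"] e True by simp
        finally show ?thesis using v pk0[OF True] by simp
      next
        case False
        then have r1: "r = 2*t + 1" using rr by simp
        have v: "int (card (ball_r n r \<pi> \<inter> ball_r n r id)) = fE1 t s"
          unfolding T(4) by (rule conv_E1[OF T(1) two]) (use T(3) e r1 in auto)
        have "fE1 t s \<le> fO1 t (s + 1)" using E1_le[of s t] e r1 by simp
        also have "\<dots> \<le> fO1 t 4" using O1_max[OF t2, of "s + 1"] e r1 by simp
        finally show ?thesis using v pk1[OF r1] by simp
      qed
    qed
  qed
  define s0 where "s0 = (if r = 2*t then 3 else 4::nat)"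
  have ls: "lstar = 2*s0 - 1" by (simp add: lstar_def s0_def)
  have s0: "2 \<le> s0" "s0 \<le> r" using t2 rr by (auto simp: s0_def)
  have adm: "admissible r lstar" unfolding admissible_def ls using s0 by blast
  obtain \<pi> where p: "\<pi> \<in> Sym n" and ct: "cycle_type \<pi> = I_type r (2*s0 - 1)"
    using construct[OF s0 nn] by blast
  have "int (card (ball_r n r \<pi> \<inter> ball_r n r id)) = (if r = 2*t then fO0 t s0 else fO1 t s0)"
    by (rule odd_val[OF p ct s0])
  also have "\<dots> = int F" using pk0 pk1 rr by (auto simp: s0_def)
  finally have "card (ball_r n r \<pi> \<inter> ball_r n r id) = F" by simp
  then have part3: "\<exists>\<pi> \<in> Sym n. cycle_type \<pi> = I_type r lstar \<and> card (ball_r n r \<pi> \<inter> ball_r n r id) = F"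
    using p ct ls by blast
  show ?thesis using part1 adm part3 unfolding F_def by blast
qed


end
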